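(* Consider the ROSS algorithm described in the context and suppose Assumptions (A1), (A2), (A3) hold. Let $\bar{\mathbf{G}}^{[t]}=[\bar g^{[t]}_1,\dots,\bar g^{[t]}_N]$ and $\mathbf{G}^{[t]}=[g^{[t]}_{1,1},\dots,g^{[t]}_{N,N}]$ be the $d\times N$ matrices with these columns, and $\|\cdot\|_{F}$ the Frobenius norm. Then for every round $t\ge1$, $$\mathbb{E}\left[\left\|\bar{\mathbf{G}}^{[t]}-\mathbf{G}^{[t]}\right\|_F^2\right]\le\frac{2N\sigma^2}{\omega_{min}^4}+2N\sigma^2+\frac{8N\varsigma^2}{\omega_{min}^4}+8N\varsigma^2+\left(\frac{16L^2}{\omega_{min}^4}+16L^2\right)\sum_{i=1}^N\mathbb{E}\left[\left\|x^{[t-1]}_i-\bar x^{[t-1]}\right\|^2\right]+\left(\frac{8N}{\omega_{min}^4}+8N\right)\mathbb{E}\left[\left\|\frac1N\sum_{i=1}^N\nabla f_i\left(x^{[t-1]}_i\right)\right\|^2\right].$$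
   Context: Setting: $N\ge1$ agents $\mathcal{N}=\{1,\dots,N\}$. $\mathbf{W}=(\omega_{i,j})\in[0,1]^{N\times N}$ is a symmetric doubly stochastic matrix ($\omega_{i,j}=\omega_{j,i}$, $\sum_{j}\omega_{i,j}=1$). $\mathcal{N}_i=\{j\in\mathcal{N}:\omega_{i,j}>0\}$ is the neighborhood of agent $i$ (the algorithm treats $i$ itself as a member of $\mathcal{N}_i$), and $\omega_{min}=\min_{i\in\mathcal{N},j\in\mathcal{N}_i}\omega_{i,j}$. Agent $i$ has a data distribution $\mathcal{D}_i$; $F(x;\xi)$ is a real-valued loss, differentiable in $x\in\mathbb{R}^d$; $f_i(x)=\mathbb{E}_{\xi\sim\mathcal{D}_i}[F(x;\xi)]$ and $\mathcal{F}(x)=\frac1N\sum_{i=1}^N f_i(x)$. A finite validation set $\mathcal{Q}$ is available to every agent, and $J(\xi;x)$ denotes the accuracy of model $x$ on sample $\xi$. Algorithm ROSS (learning rate $\gamma>0$, momentum coefficient $\alpha$): all agents start from a common point $x_i^{[0]}=x^{[0]}$ with $u_i^{[0]}=0$. In each round $t=1,2,\dots$, each agent $i$ draws a sample $\xi_{i,t}\sim\mathcal{D}_i$ (independently across agents and rounds) and for each $j\in\mathcal{N}_i$ computes $g^{[t]}_{i,j}=\nabla F(x^{[t-1]}_j;\xi_{i,t})$ (so $g^{[t]}_{i,i}$ is its local stochastic gradient). Agent $i$ then sets $x^{[t]}_{i,j}=x^{[t-1]}_i-\gamma g^{[t]}_{j,i}$ for $j\in\mathcal{N}_i$; for $\mathcal{N}'\subseteq\mathcal{N}_i$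 it defines $v(\mathcal{N}')=\frac{1}{|\mathcal{Q}|}\sum_{\xi\in\mathcal{Q}}J\big(\xi;\frac{1}{|\mathcal{N}'|}\sum_{j\in\mathcal{N}'}x^{[t]}_{i,j}\big)$ ($v(\emptyset)=0$); Shapley values $\varphi^{[t]}_{i,j}=\sum_{\mathcal{N}'\subseteq\mathcal{N}_i\setminus\{j\}}\frac{v(\mathcal{N}'\cup\{j\})-v(\mathcal{N}')}{|\mathcal{N}_i|\binom{|\mathcal{N}_i|-1}{|\mathcal{N}'|}}$; normalized values $\hat\varphi^{[t]}_{i,j}=\frac{\varphi^{[t]}_{i,j}-\min_{k\in\mathcal{N}_i}\varphi^{[t]}_{i,k}}{\max_{k\in\mathcal{N}_i}\varphi^{[t]}_{i,k}-\min_{k\in\mathcal{N}_i}\varphi^{[t]}_{i,k}}$; weights $\pi^{[t]}_{i,j}=\frac{\hat\varphi^{[t]}_{i,j}}{\omega_{i,j}\sum_{k\in\mathcal{N}_i}\hat\varphi^{[t]}_{i,k}}$; then $\bar g^{[t]}_i=\sum_{j\in\mathcal{N}_i}\pi^{[t]}_{i,j}g^{[t]}_{j,i}$, $\hat u^{[t]}_i=\alpha u^{[t-1]}_i+\bar g^{[t]}_i$, $\hat x^{[t]}_i=x^{[t-1]}_i-\gamma\hat u^{[t]}_i$, $u^{[t]}_i=\sum_{j\in\mathcal{N}_i}\omega_{i,j}\hat u^{[t]}_j$, $x^{[t]}_i=\sum_{j\in\mathcal{N}_i}\omega_{i,j}\hat x^{[t]}_j$. Write $\bar x^{[t]}=\frac1N\sum_{i=1}^N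 x^{[t]}_i$. Expectations are over the random samples. Assumptions: (A1) each $f_i$ is $L$-smooth. (A2) there exist $\sigma>0,\varsigma>0$ with $\mathbb{E}_{\xi\sim\mathcal{D}_i}\|\nabla F(x;\xi)-\nabla f_i(x)\|^2\le\sigma^2$ and $\|\nabla f_i(x)-\nabla\mathcal{F}(x)\|^2\le\varsigma^2$ for all $x$ and all $i$. (A3) with $\lambda_k(\mathbf{W})$ the $k$-th largest eigenvalue of $\mathbf{W}$, $\lambda_1(\mathbf{W})=1$ and $\max\{|\lambda_2(\mathbf{W})|,|\lambda_N(\mathbf{W})|\}\le\sqrt{\rho}$ for some constant $\rho<1$. *)

theory Defs
  imports "HOL-Analysis.Analysis" "HOL-Probability.Probability"
begin

definition grad :: "('a::real_inner \<Rightarrow> real) \<Rightarrow> 'a \<Rightarrow> 'a" where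
  "grad f x = (SOME g. (f has_derivative (\<lambda>h. g \<bullet> h)) (at x))"

definition L_smooth :: "('a::real_inner \<Rightarrow> real) \<Rightarrow> real \<Rightarrow> bool" where
  "L_smooth f L \<longleftrightarrow> (\<forall>x. f differentiable (at x)) \<and>
     (\<forall>x y. norm (grad f x - grad f y) \<le> L * norm (x - y))"

definition doubly_stochastic_sym :: "real^'n^'n \<Rightarrow> bool" where
  "doubly_stochastic_sym W \<longleftrightarrow>
     (\<forall>i j. 0 \<le> W$i$j \<and> W$i$j \<le> 1) \<and> (\<forall>i j. W$i$j = W$j$i) \<and>
     (\<forall>i. (\<Sum>j\<in>UNIV. W$i$j) = 1)"

text \<open>lam is the list of eigenvalues of W (with multiplicity) in non-increasing order:
  lam ! (k-1) is the k-th largest eigenvalue.\<close>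
definition eigs_desc :: "real^'n^'n \<Rightarrow> real list \<Rightarrow> bool" where
  "eigs_desc W lam \<longleftrightarrow> length lam = CARD('n) \<and> sorted_wrt (\<lambda>a b. a \<ge> b) lam \<and>
     (\<forall>\<mu>::real. det (\<mu> *\<^sub>R mat 1 - W) = (\<Prod>k<CARD('n). \<mu> - lam ! k))"

definition spectral_gap :: "real^'n^'n \<Rightarrow> real \<Rightarrow> bool" where
  "spectral_gap W \<rho> \<longleftrightarrow> (\<exists>lam. eigs_desc W lam \<and> lam ! 0 = 1 \<and>
     (2 \<le> CARD('n) \<longrightarrow> max \<bar>lam ! 1\<bar> \<bar>lam ! (CARD('n) - 1)\<bar> \<le> sqrt \<rho>))"

definition nbr :: "real^'n^'n \<Rightarrow> 'n \<Rightarrow> 'n set" where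
  "nbr W i = {j. 0 < W$i$j} \<union> {i}"

definition omega_min :: "real^'n^'n \<Rightarrow> real" where
  "omega_min W = Min {W$i$j | i j. 0 < W$i$j}"

definition cols_mat :: "('n \<Rightarrow> real^'d) \<Rightarrow> real^'n^'d" where
  "cols_mat v = (\<chi> r. \<chi> c. v c $ r)"

definition frob_norm :: "real^'n^'d \<Rightarrow> real" where
  "frob_norm A = sqrt (\<Sum>r\<in>UNIV. \<Sum>c\<in>UNIV. (A$r$c)\<^sup>2)"

definition coal_val :: "('z \<Rightarrow> 'v::real_vector \<Rightarrow> real) \<Rightarrow> 'z set \<Rightarrow> ('n \<Rightarrow> 'v) \<Rightarrow> 'n set \<Rightarrow> real" where
  "coal_val J Q y S = (if S = {} then 0
     else (\<Sum>\<xi>\<in>Q. J \<xi> ((1 / real (card S)) *\<^sub>R (\<Sum>j\<in>S. y j))) / real (card Q))"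

definition shapley :: "('n set \<Rightarrow> real) \<Rightarrow> 'n set \<Rightarrow> 'n \<Rightarrow> real" where
  "shapley v M j = (\<Sum>S\<in>Pow (M - {j}).
     (v (S \<union> {j}) - v S) / (real (card M) * real ((card M - 1) choose card S)))"

definition shap_norm :: "('n \<Rightarrow> real) \<Rightarrow> 'n set \<Rightarrow> 'n \<Rightarrow> real" where
  "shap_norm \<phi> M j = (\<phi> j - Min (\<phi> ` M)) / (Max (\<phi> ` M) - Min (\<phi> ` M))"

definition sgrad :: "('v::real_inner \<Rightarrow> 'z \<Rightarrow> real) \<Rightarrow> 'v \<Rightarrow> 'z \<Rightarrow> 'v" where
  "sgrad F x \<xi> = grad (\<lambda>y. F y \<xi>) x"

text \<open>g_{i,j} = grad F(x_j; xi_i), where x is the previous iterate and s i the sample of agent i.\<close>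
definition ross_g :: "('v::real_inner \<Rightarrow> 'z \<Rightarrow> real) \<Rightarrow> ('n \<Rightarrow> 'v) \<Rightarrow> ('n \<Rightarrow> 'z) \<Rightarrow> 'n \<Rightarrow> 'n \<Rightarrow> 'v" where
  "ross_g F x s i j = sgrad F (x j) (s i)"

definition ross_loc :: "('v::real_inner \<Rightarrow> 'z \<Rightarrow> real) \<Rightarrow> real \<Rightarrow> ('n \<Rightarrow> 'v) \<Rightarrow> ('n \<Rightarrow> 'z) \<Rightarrow> 'n \<Rightarrow> 'n \<Rightarrow> 'v" where
  "ross_loc F \<gamma> x s i j = x i - \<gamma> *\<^sub>R ross_g F x s j i"

definition ross_phi :: "real^'n^'n \<Rightarrow> ('v::real_inner \<Rightarrow> 'z \<Rightarrow> real) \<Rightarrow> ('z \<Rightarrow> 'v \<Rightarrow> real) \<Rightarrow> 'z set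
    \<Rightarrow> real \<Rightarrow> ('n \<Rightarrow> 'v) \<Rightarrow> ('n \<Rightarrow> 'z) \<Rightarrow> 'n \<Rightarrow> 'n \<Rightarrow> real" where
  "ross_phi W F J Q \<gamma> x s i = shapley (coal_val J Q (ross_loc F \<gamma> x s i)) (nbr W i)"

definition ross_pi :: "real^'n^'n \<Rightarrow> ('v::real_inner \<Rightarrow> 'z \<Rightarrow> real) \<Rightarrow> ('z \<Rightarrow> 'v \<Rightarrow> real) \<Rightarrow> 'z set
    \<Rightarrow> real \<Rightarrow> ('n \<Rightarrow> 'v) \<Rightarrow> ('n \<Rightarrow> 'z) \<Rightarrow> 'n \<Rightarrow> 'n \<Rightarrow> real" where
  "ross_pi W F J Q \<gamma> x s i j =
     shap_norm (ross_phi W F J Q \<gamma> x s i) (nbr W i) j /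
     (W$i$j * (\<Sum>k\<in>nbr W i. shap_norm (ross_phi W F J Q \<gamma> x s i) (nbr W i) k))"

definition ross_gbar :: "real^'n^'n \<Rightarrow> ('v::real_inner \<Rightarrow> 'z \<Rightarrow> real) \<Rightarrow> ('z \<Rightarrow> 'v \<Rightarrow> real) \<Rightarrow> 'z set
    \<Rightarrow> real \<Rightarrow> ('n \<Rightarrow> 'v) \<Rightarrow> ('n \<Rightarrow> 'z) \<Rightarrow> 'n \<Rightarrow> 'v" where
  "ross_gbar W F J Q \<gamma> x s i =
     (\<Sum>j\<in>nbr W i. ross_pi W F J Q \<gamma> x s i j *\<^sub>R ross_g F x s j i)"

definition ross_step :: "real^'n^'n \<Rightarrow> ('v::real_inner \<Rightarrow> 'z \<Rightarrow> real) \<Rightarrow> ('z \<Rightarrow> 'v \<Rightarrow> real) \<Rightarrow> 'z set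
    \<Rightarrow> real \<Rightarrow> real \<Rightarrow> ('n \<Rightarrow> 'v) \<times> ('n \<Rightarrow> 'v) \<Rightarrow> ('n \<Rightarrow> 'z) \<Rightarrow> ('n \<Rightarrow> 'v) \<times> ('n \<Rightarrow> 'v)" where
  "ross_step W F J Q \<gamma> \<alpha> xu s =
     (let x = fst xu; u = snd xu;
          uh = (\<lambda>i. \<alpha> *\<^sub>R u i + ross_gbar W F J Q \<gamma> x s i);
          xh = (\<lambda>i. x i - \<gamma> *\<^sub>R uh i)
      in ((\<lambda>i. \<Sum>j\<in>nbr W i. W$i$j *\<^sub>R xh j), (\<lambda>i. \<Sum>j\<in>nbr W i. W$i$j *\<^sub>R uh j)))"

text \<open>State (x^t, u^t) after t rounds; xi t i is the sample drawn by agent i in round t.\<close>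
primrec ross_state :: "real^'n^'n \<Rightarrow> ('v::real_inner \<Rightarrow> 'z \<Rightarrow> real) \<Rightarrow> ('z \<Rightarrow> 'v \<Rightarrow> real) \<Rightarrow> 'z set
    \<Rightarrow> real \<Rightarrow> real \<Rightarrow> 'v \<Rightarrow> (nat \<Rightarrow> 'n \<Rightarrow> 'z) \<Rightarrow> nat \<Rightarrow> ('n \<Rightarrow> 'v) \<times> ('n \<Rightarrow> 'v)" where
  "ross_state W F J Q \<gamma> \<alpha> x0 \<xi> 0 = ((\<lambda>i. x0), (\<lambda>i. 0))"
| "ross_state W F J Q \<gamma> \<alpha> x0 \<xi> (Suc t) =
     ross_step W F J Q \<gamma> \<alpha> (ross_state W F J Q \<gamma> \<alpha> x0 \<xi> t) (\<xi> (Suc t))"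

text \<open>Sample space: one sample per (round, agent), independent, agent i's sample ~ D i.\<close>
definition sample_space :: "('n \<Rightarrow> 'z measure) \<Rightarrow> (nat \<times> 'n \<Rightarrow> 'z) measure" where
  "sample_space D = (\<Pi>\<^sub>M p\<in>UNIV. D (snd p))"

end

theory Submission
  imports Defs
begin

lemma grad_has_derivative:
  fixes f :: "'a::euclidean_space \<Rightarrow> real"
  assumes "f differentiable (at x)"
  shows "(f has_derivative (\<lambda>h. grad f x \<bullet> h)) (at x)"
proof -
  obtain D where D: "(f has_derivative D) (at x)" using assms differentiable_def by blast
  then have lin: "linear D" using has_derivative_linear by blast
  define g where "g = (\<Sum>b\<in>Basis. D b *\<^sub>R b)"
  have "D = (\<lambda>h. g \<bullet> h)"
  proof
    fix h
    have "D h = D (\<Sum>b\<in>Basis. (h \<bullet> b) *\<^sub>R b)" by (simp add: euclidean_representation)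
    also have "\<dots> = (\<Sum>b\<in>Basis. (h \<bullet> b) * D b)" using lin by (simp add: linear_sum linear_scale)
    also have "\<dots> = g \<bullet> h" by (simp add: g_def inner_sum_right inner_commute mult.commute)
    finally show "D h = g \<bullet> h" .
  qed
  then have ex: "(f has_derivative (\<lambda>h. g \<bullet> h)) (at x)" using D by simp
  show ?thesis unfolding grad_def by (rule someI[where x=g]) (rule ex)
qed

lemma grad_eqI:
  fixes f :: "'a::euclidean_space \<Rightarrow> real"
  assumes "(f has_derivative (\<lambda>h. g \<bullet> h)) (at x)"
  shows "grad f x = g"
proof -
  have "f differentiable (at x)" using assms differentiable_def by blast
  from has_derivative_unique[OF grad_has_derivative[OF this] assms]
  have "(\<lambda>h. grad f x \<bullet> h) = (\<lambda>h. g \<bullet> h)" .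
  then have "grad f x \<bullet> (grad f x - g) = g \<bullet> (grad f x - g)" by metis
  then have "(grad f x - g) \<bullet> (grad f x - g) = 0" by (simp add: inner_diff_left)
  then show ?thesis by simp
qed

lemma sym_diff_quot:
  fixes \<psi> :: "real \<Rightarrow> real"
  assumes d: "(\<psi> has_real_derivative c) (at 0)" and h: "h \<longlonglongrightarrow> 0" and hn: "\<And>n. h n \<noteq> 0"
  shows "(\<lambda>n. (\<psi> (h n) - \<psi> (- h n)) / (2 * h n)) \<longlonglongrightarrow> c"
proof -
  have D: "((\<lambda>k. (\<psi> (0 + k) - \<psi> 0) / k) \<longlongrightarrow> c) (at 0)" using d DERIV_def by blast
  have s1: "(\<lambda>n. (\<psi> (0 + h n) - \<psi> 0) / h n) \<longlonglongrightarrow> c"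
    using D[unfolded tendsto_at_iff_sequentially, rule_format, of h] h hn by (auto simp: comp_def)
  have h2: "(\<lambda>n. - h n) \<longlonglongrightarrow> 0" using tendsto_minus[OF h] by simp
  have s2: "(\<lambda>n. (\<psi> (0 + - h n) - \<psi> 0) / (- h n)) \<longlonglongrightarrow> c"
    using D[unfolded tendsto_at_iff_sequentially, rule_format, of "\<lambda>n. - h n"] h2 hn by (auto simp: comp_def)
  have lim: "(\<lambda>n. ((\<psi> (0 + h n) - \<psi> 0) / h n + (\<psi> (0 + - h n) - \<psi> 0) / (- h n)) / 2) \<longlonglongrightarrow> (c + c) / 2"
    by (intro tendsto_intros s1 s2) simp
  have cc: "(c + c) / 2 = c" by simp
  have eq: "(\<lambda>n. (\<psi> (h n) - \<psi> (- h n)) / (2 * h n)) = (\<lambda>n. ((\<psi> (0 + h n) - \<psi> 0) / h n + (\<psi> (0 + - h n) - \<psi> 0) / (- h n)) / 2)"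
    using hn by (intro ext) (simp add: field_simps)
  show ?thesis unfolding eq using lim[unfolded cc] .
qed

lemma ftc_cs:
  fixes \<psi> \<psi>' :: "real \<Rightarrow> real"
  assumes ab: "a < b" and deriv: "\<And>s. (\<psi> has_real_derivative \<psi>' s) (at s)"
    and meas: "\<psi>' \<in> borel_measurable borel"
  shows "ennreal ((\<psi> b - \<psi> a)\<^sup>2) \<le> ennreal (b - a) * (\<integral>\<^sup>+s. indicator {a..b} s * ennreal ((\<psi>' s)\<^sup>2) \<partial>lborel)"
proof (cases "(\<integral>\<^sup>+s. indicator {a..b} s * ennreal ((\<psi>' s)\<^sup>2) \<partial>lborel) = \<infinity>")
  case True then show ?thesis using ab by (simp add: ennreal_mult_top)
next
  case False
  let ?I = "\<integral>\<^sup>+s. indicator {a..b} s * ennreal ((\<psi>' s)\<^sup>2) \<partial>lborel"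
  let ?g = "\<lambda>s. indicator {a..b} s *\<^sub>R \<psi>' s :: real"
  have m1: "(\<lambda>s. ennreal (norm (?g s))) \<in> borel_measurable lborel" using meas by measurable
  have m2: "(\<lambda>s. indicator {a..b} s :: ennreal) \<in> borel_measurable lborel" by measurable
  have CS: "(\<integral>\<^sup>+s. ennreal (norm (?g s)) * indicator {a..b} s \<partial>lborel)\<^sup>2
      \<le> (\<integral>\<^sup>+s. (ennreal (norm (?g s)))\<^sup>2 \<partial>lborel) * (\<integral>\<^sup>+s. (indicator {a..b} s :: ennreal)\<^sup>2 \<partial>lborel)"
    by (rule Cauchy_Schwarz_nn_integral[OF m1 m2])
  have e1: "(\<lambda>s. ennreal (norm (?g s)) * indicator {a..b} s) = (\<lambda>s. ennreal (norm (?g s)))"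
    by (auto simp: indicator_def fun_eq_iff)
  have e2: "(\<lambda>s. (ennreal (norm (?g s)))\<^sup>2) = (\<lambda>s. indicator {a..b} s * ennreal ((\<psi>' s)\<^sup>2))"
    by (auto simp: indicator_def fun_eq_iff ennreal_power)
  have e3: "(\<integral>\<^sup>+s. (indicator {a..b} s :: ennreal)\<^sup>2 \<partial>lborel) = ennreal (b - a)"
  proof -
    have "(\<lambda>s. (indicator {a..b} s :: ennreal)\<^sup>2) = indicator {a..b}" by (auto simp: indicator_def fun_eq_iff)
    then show ?thesis using ab by simp
  qed
  have CS': "(\<integral>\<^sup>+s. ennreal (norm (?g s)) \<partial>lborel)\<^sup>2 \<le> ?I * ennreal (b - a)"
    using CS unfolding e1 e2 e3 .
  have fin: "(\<integral>\<^sup>+s. ennreal (norm (?g s)) \<partial>lborel) < \<infinity>"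
  proof -
    have "?I * ennreal (b - a) < \<infinity>" using False by (simp add: ennreal_mult_less_top less_top)
    then have "(\<integral>\<^sup>+s. ennreal (norm (?g s)) \<partial>lborel)\<^sup>2 < \<infinity>" using le_less_trans[OF CS'] by blast
    then show ?thesis by (simp add: power_less_top_ennreal less_top)
  qed
  have gm: "?g \<in> borel_measurable lborel" using meas by measurable
  have int: "integrable lborel ?g"
    by (rule integrableI_bounded[OF gm fin])
  then have si: "set_integrable lborel {a..b} \<psi>'" by (simp add: set_integrable_def)
  have ftc: "(\<psi>' has_integral (\<psi> b - \<psi> a)) {a..b}"
    using ab deriv by (intro fundamental_theorem_of_calculus)
      (auto simp: has_real_derivative_iff_has_vector_derivative[symmetric] intro: has_field_derivative_at_within)
  have "(LINT s:{a..b}|lborel. \<psi>' s) = integral {a..b} \<psi>'"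
    using set_borel_integral_eq_integral(2)[OF si] .
  also have "\<dots> = \<psi> b - \<psi> a" using ftc by (simp add: integral_unique)
  finally have eqI: "(\<integral>s. ?g s \<partial>lborel) = \<psi> b - \<psi> a" by (simp add: set_lebesgue_integral_def)
  have "ennreal (norm (\<psi> b - \<psi> a)) \<le> (\<integral>\<^sup>+s. ennreal (norm (?g s)) \<partial>lborel)"
    using integral_norm_bound_ennreal[OF int] unfolding eqI .
  then have "(ennreal (norm (\<psi> b - \<psi> a)))\<^sup>2 \<le> (\<integral>\<^sup>+s. ennreal (norm (?g s)) \<partial>lborel)\<^sup>2"
    by (intro power_mono) auto
  also have "\<dots> \<le> ?I * ennreal (b - a)" by (rule CS')
  finally have fin2: "(ennreal (norm (\<psi> b - \<psi> a)))\<^sup>2 \<le> ennreal (b - a) * ?I" by (simp add: mult.commute)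
  have "(ennreal (norm (\<psi> b - \<psi> a)))\<^sup>2 = ennreal ((\<psi> b - \<psi> a)\<^sup>2)"
    by (subst ennreal_power) auto
  then show ?thesis using fin2 by simp
qed

lemma line_deriv:
  fixes u :: "'a::euclidean_space \<Rightarrow> real"
  assumes "\<And>y. u differentiable (at y)"
  shows "((\<lambda>h. u (x + h *\<^sub>R e)) has_real_derivative (grad u (x + s *\<^sub>R e) \<bullet> e)) (at s)"
proof -
  have 1: "((\<lambda>h. x + h *\<^sub>R e) has_derivative (\<lambda>h. h *\<^sub>R e)) (at s)"
    by (auto intro!: derivative_eq_intros)
  have 2: "(u has_derivative (\<lambda>v. grad u (x + s *\<^sub>R e) \<bullet> v)) (at (x + s *\<^sub>R e))"
    using grad_has_derivative assms by blast
  from diff_chain_at[OF 1 2]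
  have "((u \<circ> (\<lambda>h. x + h *\<^sub>R e)) has_derivative ((\<lambda>v. grad u (x + s *\<^sub>R e) \<bullet> v) \<circ> (\<lambda>h. h *\<^sub>R e))) (at s)" .
  moreover have "((\<lambda>v. grad u (x + s *\<^sub>R e) \<bullet> v) \<circ> (\<lambda>h. h *\<^sub>R e)) = (*) (grad u (x + s *\<^sub>R e) \<bullet> e)"
    by (auto simp: fun_eq_iff)
  ultimately show ?thesis unfolding has_field_derivative_def by (simp add: comp_def)
qed

lemma nonzero_near:
  fixes \<phi> :: "real \<Rightarrow> real"
  assumes d: "(\<phi> has_real_derivative c) (at 0)" and c: "c \<noteq> 0"
  shows "\<exists>\<delta>>0. \<forall>h. 0 < \<bar>h\<bar> \<and> \<bar>h\<bar> < \<delta> \<longrightarrow> \<phi> h \<noteq> 0"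
proof (cases "\<phi> 0 = 0")
  case True
  have "(\<lambda>k. (\<phi> (0 + k) - \<phi> 0) / k) \<midarrow>0\<rightarrow> c" using DERIV_D[OF d] .
  from LIM_D[OF this, of "\<bar>c\<bar>/2"] c obtain d where d: "d > 0"
    and H: "\<And>k. k \<noteq> 0 \<and> norm (k - 0) < d \<Longrightarrow> norm ((\<phi> (0 + k) - \<phi> 0) / k - c) < \<bar>c\<bar>/2" by auto
  show ?thesis
  proof (intro exI[of _ d] conjI allI impI d)
    fix h assume h: "0 < \<bar>h\<bar> \<and> \<bar>h\<bar> < d"
    show "\<phi> h \<noteq> 0"
    proof
      assume "\<phi> h = 0"
      with H[of h] h True have "\<bar>c\<bar> < \<bar>c\<bar>/2" by auto
      with c show False by simp
    qed
  qed
next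
  case False
  have "isCont \<phi> 0" using DERIV_isCont[OF d] .
  then have "\<phi> \<midarrow>0\<rightarrow> \<phi> 0" by (simp add: isCont_def)
  from LIM_D[OF this, of "\<bar>\<phi> 0\<bar>"] False obtain d where d: "d > 0"
    and H: "\<And>k. k \<noteq> 0 \<and> norm (k - 0) < d \<Longrightarrow> norm (\<phi> k - \<phi> 0) < \<bar>\<phi> 0\<bar>" by auto
  show ?thesis
  proof (intro exI[of _ d] conjI allI impI d)
    fix h assume h: "0 < \<bar>h\<bar> \<and> \<bar>h\<bar> < d"
    show "\<phi> h \<noteq> 0"
    proof
      assume "\<phi> h = 0"
      with H[of h] h show False by auto
    qed
  qed
qed

lemma L2_conv:
  fixes Q :: "nat \<Rightarrow> 'z \<Rightarrow> real"
  assumes M: "prob_space M"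
    and Qi: "\<And>n. integrable M (Q n)" and Ai: "integrable M A"
    and lim: "\<And>\<xi>. \<xi> \<in> space M \<Longrightarrow> (\<lambda>n. Q n \<xi>) \<longlonglongrightarrow> A \<xi>"
    and bnd: "\<And>n. (\<integral>\<^sup>+\<xi>. ennreal ((Q n \<xi> - A \<xi>)\<^sup>2) \<partial>M) \<le> ennreal C" and C0: "0 \<le> C"
  shows "(\<lambda>n. \<integral>\<xi>. Q n \<xi> \<partial>M) \<longlonglongrightarrow> (\<integral>\<xi>. A \<xi> \<partial>M)"
proof -
  interpret prob_space M by fact
  define r where "r n \<xi> = Q n \<xi> - A \<xi>" for n \<xi>
  have ri: "integrable M (r n)" for n unfolding r_def using Qi Ai by auto
  have rm: "r n \<in> borel_measurable M" for n using ri by auto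
  have e0: "(\<lambda>n. \<integral>\<xi>. \<bar>r n \<xi>\<bar> \<partial>M) \<longlonglongrightarrow> 0"
  proof (rule LIMSEQ_I)
    fix \<epsilon> :: real assume \<epsilon>: "0 < \<epsilon>"
    define K where "K = 2 * C / \<epsilon> + 1"
    have K: "0 < K" unfolding K_def using C0 \<epsilon> by (simp add: add_nonneg_pos)
    have CK: "C / K < \<epsilon> / 2"
    proof -
      have "C / K * 2 < \<epsilon>" using C0 \<epsilon> K by (simp add: K_def field_simps)
      then show ?thesis by simp
    qed
    have dc: "(\<lambda>n. \<integral>\<xi>. min \<bar>r n \<xi>\<bar> K \<partial>M) \<longlonglongrightarrow> (\<integral>\<xi>. 0 \<partial>M)"
    proof (rule integral_dominated_convergence[where w="\<lambda>_. K"])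
      show "(\<lambda>\<xi>. 0::real) \<in> borel_measurable M" by simp
      show "(\<lambda>\<xi>. min \<bar>r n \<xi>\<bar> K) \<in> borel_measurable M" for n using rm[of n] by measurable
      show "integrable M (\<lambda>_. K)" by simp
      show "AE \<xi> in M. (\<lambda>n. min \<bar>r n \<xi>\<bar> K) \<longlonglongrightarrow> 0"
      proof (rule AE_I2)
        fix \<xi> assume "\<xi> \<in> space M"
        then have "(\<lambda>n. Q n \<xi> - A \<xi>) \<longlonglongrightarrow> A \<xi> - A \<xi>" using lim[of \<xi>] by (intro tendsto_diff) auto
        then have "(\<lambda>n. r n \<xi>) \<longlonglongrightarrow> 0" unfolding r_def by simp
        then have "(\<lambda>n. min \<bar>r n \<xi>\<bar> K) \<longlonglongrightarrow> min \<bar>0\<bar> K" by (intro tendsto_intros)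
        then show "(\<lambda>n. min \<bar>r n \<xi>\<bar> K) \<longlonglongrightarrow> 0" using K by simp
      qed
      show "AE \<xi> in M. norm (min \<bar>r n \<xi>\<bar> K) \<le> K" for n using K by auto
    qed
    then obtain N where N: "\<And>n. n \<ge> N \<Longrightarrow> norm ((\<integral>\<xi>. min \<bar>r n \<xi>\<bar> K \<partial>M) - 0) < \<epsilon> / 2"
      using LIMSEQ_D[of _ 0 "\<epsilon>/2"] \<epsilon> by force
    show "\<exists>no. \<forall>n\<ge>no. norm ((\<integral>\<xi>. \<bar>r n \<xi>\<bar> \<partial>M) - 0) < \<epsilon>"
    proof (intro exI allI impI)
      fix n assume n: "N \<le> n"
      have pw: "\<bar>r n \<xi>\<bar> \<le> min \<bar>r n \<xi>\<bar> K + (r n \<xi>)\<^sup>2 / K" for \<xi>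
      proof (cases "\<bar>r n \<xi>\<bar> \<le> K")
        case True then show ?thesis using K by simp
      next
        case False
        then have "\<bar>r n \<xi>\<bar> * K \<le> \<bar>r n \<xi>\<bar> * \<bar>r n \<xi>\<bar>" using K by (intro mult_left_mono) auto
        then have "\<bar>r n \<xi>\<bar> \<le> (r n \<xi>)\<^sup>2 / K" using K by (simp add: field_simps power2_eq_square)
        then show ?thesis using False K by simp
      qed
      have mi: "integrable M (\<lambda>\<xi>. min \<bar>r n \<xi>\<bar> K)"
        using rm[of n] K by (intro integrable_const_bound[where B=K]) auto
      have "ennreal (\<integral>\<xi>. \<bar>r n \<xi>\<bar> \<partial>M) = (\<integral>\<^sup>+\<xi>. ennreal \<bar>r n \<xi>\<bar> \<partial>M)"
        using ri[of n] by (intro nn_integral_eq_integral[symmetric]) auto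
      also have "\<dots> \<le> (\<integral>\<^sup>+\<xi>. ennreal (min \<bar>r n \<xi>\<bar> K) + ennreal (1/K) * ennreal ((r n \<xi>)\<^sup>2) \<partial>M)"
        using pw K by (intro nn_integral_mono) (simp add: ennreal_mult[symmetric] ennreal_plus[symmetric] del: ennreal_plus)
      also have "\<dots> = (\<integral>\<^sup>+\<xi>. ennreal (min \<bar>r n \<xi>\<bar> K) \<partial>M) + ennreal (1/K) * (\<integral>\<^sup>+\<xi>. ennreal ((r n \<xi>)\<^sup>2) \<partial>M)"
        using rm[of n] by (subst nn_integral_add) (auto simp: nn_integral_cmult)
      also have "(\<integral>\<^sup>+\<xi>. ennreal (min \<bar>r n \<xi>\<bar> K) \<partial>M) = ennreal (\<integral>\<xi>. min \<bar>r n \<xi>\<bar> K \<partial>M)"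
        using mi K by (intro nn_integral_eq_integral) auto
      also have "ennreal (1/K) * (\<integral>\<^sup>+\<xi>. ennreal ((r n \<xi>)\<^sup>2) \<partial>M) \<le> ennreal (1/K) * ennreal C"
        using bnd[of n] unfolding r_def by (intro mult_left_mono) auto
      finally have "ennreal (\<integral>\<xi>. \<bar>r n \<xi>\<bar> \<partial>M) \<le> ennreal (\<integral>\<xi>. min \<bar>r n \<xi>\<bar> K \<partial>M) + ennreal (1/K) * ennreal C"
        by (simp add: add_left_mono)
      also have "\<dots> = ennreal ((\<integral>\<xi>. min \<bar>r n \<xi>\<bar> K \<partial>M) + C / K)"
        using K C0 by (simp add: ennreal_mult[symmetric] ennreal_plus[symmetric] integral_nonneg del: ennreal_plus)
      finally have "(\<integral>\<xi>. \<bar>r n \<xi>\<bar> \<partial>M) \<le> (\<integral>\<xi>. min \<bar>r n \<xi>\<bar> K \<partial>M) + C / K"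
        using K C0 by (subst (asm) ennreal_le_iff) (auto intro!: add_nonneg_nonneg integral_nonneg divide_nonneg_nonneg)
      moreover have "(\<integral>\<xi>. min \<bar>r n \<xi>\<bar> K \<partial>M) < \<epsilon> / 2" using N[OF n] by simp
      moreover have "0 \<le> (\<integral>\<xi>. \<bar>r n \<xi>\<bar> \<partial>M)" by simp
      ultimately have "(\<integral>\<xi>. \<bar>r n \<xi>\<bar> \<partial>M) < \<epsilon>" using CK by linarith
      then show "norm ((\<integral>\<xi>. \<bar>r n \<xi>\<bar> \<partial>M) - 0) < \<epsilon>" by simp
    qed
  qed
  have "(\<lambda>n. (\<integral>\<xi>. Q n \<xi> \<partial>M) - (\<integral>\<xi>. A \<xi> \<partial>M)) \<longlonglongrightarrow> 0"
  proof (rule Lim_null_comparison[OF _ e0])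
    show "\<forall>\<^sub>F n in sequentially. norm ((\<integral>\<xi>. Q n \<xi> \<partial>M) - (\<integral>\<xi>. A \<xi> \<partial>M)) \<le> (\<integral>\<xi>. \<bar>r n \<xi>\<bar> \<partial>M)"
    proof (intro always_eventually allI)
      fix n
      have "(\<integral>\<xi>. Q n \<xi> \<partial>M) - (\<integral>\<xi>. A \<xi> \<partial>M) = (\<integral>\<xi>. r n \<xi> \<partial>M)"
        unfolding r_def using Qi Ai by simp
      then show "norm ((\<integral>\<xi>. Q n \<xi> \<partial>M) - (\<integral>\<xi>. A \<xi> \<partial>M)) \<le> (\<integral>\<xi>. \<bar>r n \<xi>\<bar> \<partial>M)"
        using integral_abs_bound[of M "r n"] by simp
    qed
  qed
  then have "(\<lambda>n. ((\<integral>\<xi>. Q n \<xi> \<partial>M) - (\<integral>\<xi>. A \<xi> \<partial>M)) + (\<integral>\<xi>. A \<xi> \<partial>M)) \<longlonglongrightarrow> 0 + (\<integral>\<xi>. A \<xi> \<partial>M)"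
    by (intro tendsto_add) auto
  then show ?thesis by simp
qed

lemma abs_le_1_sq: "\<bar>y::real\<bar> \<le> 1 + y\<^sup>2"
proof -
  have "0 \<le> (\<bar>y\<bar> - 1/2)\<^sup>2" by simp
  then have "0 \<le> \<bar>y\<bar>\<^sup>2 - \<bar>y\<bar> + 1/4" by (simp add: power2_eq_square algebra_simps)
  then show ?thesis by simp
qed

lemma abs_le_1_sq_enn: "ennreal \<bar>y::real\<bar> \<le> 1 + ennreal (y\<^sup>2)"
proof -
  have "ennreal \<bar>y\<bar> \<le> ennreal (1 + y\<^sup>2)" using abs_le_1_sq by (rule ennreal_leI)
  also have "ennreal (1 + y\<^sup>2) = 1 + ennreal (y\<^sup>2)" by (subst ennreal_plus) auto
  finally show ?thesis .
qed

lemma sq_diff_le: "(p - q)\<^sup>2 \<le> 2 * p\<^sup>2 + 2 * (q::real)\<^sup>2"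
proof -
  have "0 \<le> (p + q)\<^sup>2" by simp
  then show ?thesis by (simp add: power2_eq_square algebra_simps)
qed

lemma sq_add_le: "(p + q)\<^sup>2 \<le> 2 * p\<^sup>2 + 2 * (q::real)\<^sup>2"
  using sq_diff_le[of p "-q"] by simp

lemma ennreal_lin_eq:
  assumes "0 \<le> c" "0 \<le> p" "0 \<le> q"
  shows "ennreal c * ennreal p + ennreal q = ennreal (c * p + q)"
  using assms by (simp add: ennreal_mult[symmetric] ennreal_plus[symmetric] del: ennreal_plus)

lemma ennreal_lin_le:
  assumes "x \<le> c * p + q" "0 \<le> c" "0 \<le> p" "0 \<le> q"
  shows "ennreal x \<le> ennreal c * ennreal p + ennreal q"
proof -
  have "ennreal c * ennreal p + ennreal q = ennreal (c * p + q)"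
    using assms by (simp add: ennreal_mult[symmetric] ennreal_plus[symmetric] del: ennreal_plus)
  then show ?thesis using assms(1) by (simp add: ennreal_leI)
qed

lemma ennreal_lin2_eq:
  assumes "0 \<le> p" "0 \<le> q" "0 \<le> c"
  shows "ennreal c * ennreal p + ennreal c * ennreal q = ennreal (c * p + c * q)"
  using assms by (simp add: ennreal_mult[symmetric] ennreal_plus[symmetric] del: ennreal_plus)

lemma ennreal_lin2_le:
  assumes "x \<le> c * p + c * q" "0 \<le> p" "0 \<le> q" "0 \<le> c"
  shows "ennreal x \<le> ennreal c * ennreal p + ennreal c * ennreal q"
proof -
  have "ennreal c * ennreal p + ennreal c * ennreal q = ennreal (c * p + c * q)"
    using assms by (simp add: ennreal_mult[symmetric] ennreal_plus[symmetric] del: ennreal_plus)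
  then show ?thesis using assms(1) by (simp add: ennreal_leI)
qed

lemma second_moment:
  fixes a :: "'z \<Rightarrow> 'a::euclidean_space"
  assumes M: "prob_space M" and am: "a \<in> borel_measurable M"
    and var: "(\<integral>\<^sup>+\<xi>. ennreal ((norm (a \<xi> - v))\<^sup>2) \<partial>M) \<le> ennreal (\<sigma>\<^sup>2)"
  shows "(\<integral>\<^sup>+\<xi>. ennreal ((norm (a \<xi>))\<^sup>2) \<partial>M) \<le> ennreal (2*\<sigma>\<^sup>2 + 2*(norm v)\<^sup>2)"
proof -
  interpret prob_space M by fact
  note am[measurable]
  have m0: "(\<lambda>\<xi>. ennreal ((norm (a \<xi> - v))\<^sup>2)) \<in> borel_measurable M" by measurable
  have m1: "(\<lambda>\<xi>. ennreal 2 * ennreal ((norm (a \<xi> - v))\<^sup>2)) \<in> borel_measurable M" by measurable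
  have pw: "(norm (a \<xi>))\<^sup>2 \<le> 2 * (norm (a \<xi> - v))\<^sup>2 + 2 * (norm v)\<^sup>2" for \<xi>
  proof -
    have "norm (a \<xi>) \<le> norm (a \<xi> - v) + norm v" using norm_triangle_ineq[of "a \<xi> - v" v] by simp
    then have "(norm (a \<xi>))\<^sup>2 \<le> (norm (a \<xi> - v) + norm v)\<^sup>2" by (intro power_mono) auto
    also have "\<dots> \<le> 2 * (norm (a \<xi> - v))\<^sup>2 + 2 * (norm v)\<^sup>2" by (rule sq_add_le)
    finally show ?thesis .
  qed
  have "(\<integral>\<^sup>+\<xi>. ennreal ((norm (a \<xi>))\<^sup>2) \<partial>M) \<le> (\<integral>\<^sup>+\<xi>. ennreal 2 * ennreal ((norm (a \<xi> - v))\<^sup>2) + ennreal (2 * (norm v)\<^sup>2) \<partial>M)"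
    using pw by (intro nn_integral_mono ennreal_lin_le) auto
  also have "\<dots> = ennreal 2 * (\<integral>\<^sup>+\<xi>. ennreal ((norm (a \<xi> - v))\<^sup>2) \<partial>M) + ennreal (2 * (norm v)\<^sup>2)"
    using m0 m1 by (subst nn_integral_add) (auto simp: nn_integral_cmult emeasure_space_1)
  also have "\<dots> \<le> ennreal 2 * ennreal (\<sigma>\<^sup>2) + ennreal (2 * (norm v)\<^sup>2)"
    using var by (intro add_right_mono mult_left_mono) auto
  also have "\<dots> = ennreal (2*\<sigma>\<^sup>2 + 2*(norm v)\<^sup>2)"
    by (rule ennreal_lin_eq) auto
  finally show ?thesis .
qed

lemma unbiased:
  fixes G :: "'a::euclidean_space \<Rightarrow> 'z \<Rightarrow> real" and M :: "'z measure" and f :: "'a \<Rightarrow> real"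
  assumes M: "prob_space M"
    and Gd: "\<And>x \<xi>. (\<lambda>y. G y \<xi>) differentiable (at x)"
    and meas: "(\<lambda>p. sgrad G (fst p) (snd p)) \<in> borel_measurable (borel \<Otimes>\<^sub>M M)"
    and fdef: "\<And>x. f x = (\<integral>\<xi>. G x \<xi> \<partial>M)"
    and smooth: "L_smooth f L"
    and var: "\<And>x. (\<integral>\<^sup>+\<xi>. ennreal ((norm (sgrad G x \<xi> - grad f x))\<^sup>2) \<partial>M) \<le> ennreal (\<sigma>\<^sup>2)"
  shows "(\<integral>\<^sup>+\<xi>. ennreal ((norm (sgrad G x \<xi>))\<^sup>2) \<partial>M) \<le> ennreal (\<sigma>\<^sup>2 + (norm (grad f x))\<^sup>2)"
proof -
  interpret prob_space M by fact
  have fd: "\<And>y. f differentiable (at y)" and lip: "\<And>y z. norm (grad f y - grad f z) \<le> L * norm (y - z)"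
    using smooth by (auto simp: L_smooth_def)
  have pm: "(\<lambda>\<xi>. (y, \<xi>)) \<in> measurable M (borel \<Otimes>\<^sub>M M)" for y by measurable
  have am: "(\<lambda>\<xi>. sgrad G y \<xi>) \<in> borel_measurable M" for y
    using measurable_compose[OF pm meas] by simp
  define g where "g = grad f x"
  show ?thesis
  proof (cases "g = 0")
    case True
    then show ?thesis using var[of x] by (simp add: g_def)
  next
    case False
    define c where "c = g \<bullet> g"
    have c: "c > 0" using False by (simp add: c_def)
    define \<phi> where "\<phi> h = f (x + h *\<^sub>R g)" for h
    have phid: "(\<phi> has_real_derivative c) (at 0)"
      unfolding \<phi>_def c_def g_def using line_deriv[OF fd, of x "grad f x" 0] by simp
    obtain \<delta>0 where \<delta>0: "\<delta>0 > 0" and \<delta>0H: "\<And>h. 0 < \<bar>h\<bar> \<Longrightarrow> \<bar>h\<bar> < \<delta>0 \<Longrightarrow> \<phi> h \<noteq> 0"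
      using nonzero_near[OF phid] c by auto
    define \<delta> where "\<delta> = min \<delta>0 1"
    have \<delta>: "0 < \<delta>" "\<delta> \<le> 1" "\<delta> \<le> \<delta>0" using \<delta>0 by (auto simp: \<delta>_def)
    have intnear: "integrable M (G (x + h *\<^sub>R g))" if "0 < \<bar>h\<bar>" "\<bar>h\<bar> < \<delta>" for h
    proof (rule ccontr)
      assume "\<not> integrable M (G (x + h *\<^sub>R g))"
      then have "\<phi> h = 0" unfolding \<phi>_def fdef by (simp add: not_integrable_integral_eq)
      with \<delta>0H[of h] that \<delta> show False by auto
    qed
    define hs where "hs n = (\<delta> / 2) * inverse (real (Suc n))" for n
    have hs_pos: "0 < hs n" for n using \<delta> by (simp add: hs_def)
    have hs_le: "hs n \<le> \<delta> / 2" for n using \<delta> by (simp add: hs_def field_simps)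
    have hs_lt: "hs n < \<delta>" for n using hs_le[of n] \<delta> by linarith
    have hs_lim: "hs \<longlonglongrightarrow> 0"
      unfolding hs_def using tendsto_mult[OF tendsto_const LIMSEQ_inverse_real_of_nat, of "\<delta>/2"] by simp
    define Q where "Q n \<xi> = (G (x + hs n *\<^sub>R g) \<xi> - G (x + (- hs n) *\<^sub>R g) \<xi>) / (2 * hs n)" for n \<xi>
    have int_p: "integrable M (G (x + hs n *\<^sub>R g))" for n using intnear[of "hs n"] hs_pos[of n] hs_lt[of n] by simp
    have int_m: "integrable M (G (x + (- hs n) *\<^sub>R g))" for n using intnear[of "- hs n"] hs_pos[of n] hs_lt[of n] by simp
    have Qi: "integrable M (Q n)" for n
      unfolding Q_def using int_p[of n] int_m[of n] by (intro integrable_divide_zero Bochner_Integration.integrable_diff) auto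
    have Qint: "(\<integral>\<xi>. Q n \<xi> \<partial>M) = (\<phi> (hs n) - \<phi> (- hs n)) / (2 * hs n)" for n
      unfolding Q_def \<phi>_def fdef using int_p[of n] int_m[of n] by simp
    have Qlim: "(\<lambda>n. \<integral>\<xi>. Q n \<xi> \<partial>M) \<longlonglongrightarrow> c"
      unfolding Qint using sym_diff_quot[OF phid hs_lim] hs_pos by (simp add: less_imp_neq[symmetric])
    have psid: "((\<lambda>h. G (x + h *\<^sub>R g) \<xi>) has_real_derivative (sgrad G (x + s *\<^sub>R g) \<xi> \<bullet> g)) (at s)" for \<xi> s
      unfolding sgrad_def using line_deriv[of "\<lambda>y. G y \<xi>" x g s] Gd by simp
    have Qpt: "(\<lambda>n. Q n \<xi>) \<longlonglongrightarrow> sgrad G x \<xi> \<bullet> g" for \<xi>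
      unfolding Q_def using sym_diff_quot[OF psid[of \<xi> 0, simplified] hs_lim] hs_pos by (simp add: less_imp_neq[symmetric])
    define R where "R = norm g + \<bar>L\<bar> * norm g"
    define B where "B = (norm g)\<^sup>2 * (2*\<sigma>\<^sup>2 + 2*R\<^sup>2)"
    have B0: "0 \<le> B" by (simp add: B_def)
    have gradbnd: "norm (grad f (x + s *\<^sub>R g)) \<le> R" if "\<bar>s\<bar> \<le> 1" for s
    proof -
      have "norm (grad f (x + s *\<^sub>R g) - g) \<le> L * norm (x + s *\<^sub>R g - x)" unfolding g_def by (rule lip)
      also have "\<dots> \<le> \<bar>L\<bar> * (\<bar>s\<bar> * norm g)" by (simp add: mult_right_mono)
      also have "\<dots> \<le> \<bar>L\<bar> * norm g" using that by (intro mult_left_mono) (auto intro: mult_left_le_one_le)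
      finally have "norm (grad f (x + s *\<^sub>R g) - g) \<le> \<bar>L\<bar> * norm g" .
      moreover have "norm (grad f (x + s *\<^sub>R g)) \<le> norm (grad f (x + s *\<^sub>R g) - g) + norm g"
        using norm_triangle_ineq[of "grad f (x + s *\<^sub>R g) - g" g] by simp
      ultimately show ?thesis unfolding R_def by linarith
    qed
    have dbnd: "(\<integral>\<^sup>+\<xi>. ennreal ((sgrad G (x + s *\<^sub>R g) \<xi> \<bullet> g)\<^sup>2) \<partial>M) \<le> ennreal B" if "\<bar>s\<bar> \<le> 1" for s
    proof -
      let ?y = "x + s *\<^sub>R g"
      have pw: "(sgrad G ?y \<xi> \<bullet> g)\<^sup>2 \<le> (norm g)\<^sup>2 * (norm (sgrad G ?y \<xi>))\<^sup>2" for \<xi>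
      proof -
        have "\<bar>sgrad G ?y \<xi> \<bullet> g\<bar> \<le> norm (sgrad G ?y \<xi>) * norm g" by (rule Cauchy_Schwarz_ineq2)
        then have "\<bar>sgrad G ?y \<xi> \<bullet> g\<bar>\<^sup>2 \<le> (norm (sgrad G ?y \<xi>) * norm g)\<^sup>2" by (intro power_mono) auto
        then show ?thesis by (simp add: power_mult_distrib mult.commute)
      qed
      have "(\<integral>\<^sup>+\<xi>. ennreal ((sgrad G ?y \<xi> \<bullet> g)\<^sup>2) \<partial>M) \<le> (\<integral>\<^sup>+\<xi>. ennreal ((norm g)\<^sup>2) * ennreal ((norm (sgrad G ?y \<xi>))\<^sup>2) \<partial>M)"
        using pw by (intro nn_integral_mono) (simp add: ennreal_mult[symmetric] ennreal_leI)
      also have "\<dots> = ennreal ((norm g)\<^sup>2) * (\<integral>\<^sup>+\<xi>. ennreal ((norm (sgrad G ?y \<xi>))\<^sup>2) \<partial>M)"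
        using am[of ?y] by (intro nn_integral_cmult) measurable
      also have "\<dots> \<le> ennreal ((norm g)\<^sup>2) * ennreal (2*\<sigma>\<^sup>2 + 2*(norm (grad f ?y))\<^sup>2)"
        by (intro mult_left_mono second_moment[OF M am var]) auto
      also have "\<dots> \<le> ennreal ((norm g)\<^sup>2) * ennreal (2*\<sigma>\<^sup>2 + 2*R\<^sup>2)"
      proof -
        have "(norm (grad f ?y))\<^sup>2 \<le> R\<^sup>2" using gradbnd[OF that] by (intro power_mono) auto
        then show ?thesis by (intro mult_left_mono ennreal_leI) auto
      qed
      also have "\<dots> = ennreal B" unfolding B_def by (subst ennreal_mult[symmetric]) auto
      finally show ?thesis .
    qed
    have dm: "(\<lambda>p. sgrad G (x + fst p *\<^sub>R g) (snd p) \<bullet> g) \<in> borel_measurable (lborel \<Otimes>\<^sub>M M)"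
    proof -
      have "(\<lambda>p. (x + fst p *\<^sub>R g, snd p)) \<in> measurable (lborel \<Otimes>\<^sub>M M) (borel \<Otimes>\<^sub>M M)" by measurable
      from measurable_compose[OF this meas]
      have "(\<lambda>p. sgrad G (x + fst p *\<^sub>R g) (snd p)) \<in> borel_measurable (lborel \<Otimes>\<^sub>M M)" by simp
      then show ?thesis by measurable
    qed
    interpret PS: pair_sigma_finite lborel M
      unfolding pair_sigma_finite_def using lborel.sigma_finite_measure_axioms prob_space_imp_sigma_finite[OF M] by blast
    have Q2: "(\<integral>\<^sup>+\<xi>. ennreal ((Q n \<xi>)\<^sup>2) \<partial>M) \<le> ennreal B" for n
    proof -
      let ?h = "hs n"
      define FF where "FF s \<xi> = ennreal (1 / (2 * ?h)) * (indicator {-?h..?h} s * ennreal ((sgrad G (x + s *\<^sub>R g) \<xi> \<bullet> g)\<^sup>2))" for s \<xi>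
      have FFm: "case_prod FF \<in> borel_measurable (lborel \<Otimes>\<^sub>M M)" unfolding FF_def using dm by measurable
      have pw: "ennreal ((Q n \<xi>)\<^sup>2) \<le> (\<integral>\<^sup>+s. FF s \<xi> \<partial>lborel)" if \<xi>: "\<xi> \<in> space M" for \<xi>
      proof -
        have dmx: "(\<lambda>s. sgrad G (x + s *\<^sub>R g) \<xi> \<bullet> g) \<in> borel_measurable borel"
        proof -
          have "(\<lambda>s. (s, \<xi>)) \<in> measurable borel (lborel \<Otimes>\<^sub>M M)" using \<xi> by measurable
          from measurable_compose[OF this dm] show ?thesis by simp
        qed
        let ?I = "\<integral>\<^sup>+s. indicator {-?h..?h} s * ennreal ((sgrad G (x + s *\<^sub>R g) \<xi> \<bullet> g)\<^sup>2) \<partial>lborel"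
        have ftc: "ennreal ((G (x + ?h *\<^sub>R g) \<xi> - G (x + (-?h) *\<^sub>R g) \<xi>)\<^sup>2) \<le> ennreal (?h - -?h) * ?I"
          using ftc_cs[of "-?h" ?h "\<lambda>s. G (x + s *\<^sub>R g) \<xi>" "\<lambda>s. sgrad G (x + s *\<^sub>R g) \<xi> \<bullet> g", OF _ psid dmx] hs_pos[of n]
          by simp
        have "ennreal ((Q n \<xi>)\<^sup>2) = ennreal (1 / (2*?h)\<^sup>2) * ennreal ((G (x + ?h *\<^sub>R g) \<xi> - G (x + (-?h) *\<^sub>R g) \<xi>)\<^sup>2)"
          unfolding Q_def by (subst ennreal_mult[symmetric]) (auto simp: power_divide)
        also have "\<dots> \<le> ennreal (1 / (2*?h)\<^sup>2) * (ennreal (?h - -?h) * ?I)"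
          using ftc by (intro mult_left_mono) auto
        also have "\<dots> = ennreal (1 / (2*?h)) * ?I"
        proof -
          have "ennreal (1 / (2*?h)\<^sup>2) * ennreal (?h - -?h) = ennreal (1 / (2*?h))"
            using hs_pos[of n] by (subst ennreal_mult[symmetric]) (auto simp: power2_eq_square field_simps)
          then show ?thesis by (simp add: mult.assoc[symmetric])
        qed
        also have "\<dots> = (\<integral>\<^sup>+s. FF s \<xi> \<partial>lborel)"
          unfolding FF_def using dmx by (subst nn_integral_cmult) auto
        finally show ?thesis .
      qed
      have "(\<integral>\<^sup>+\<xi>. ennreal ((Q n \<xi>)\<^sup>2) \<partial>M) \<le> (\<integral>\<^sup>+\<xi>. (\<integral>\<^sup>+s. FF s \<xi> \<partial>lborel) \<partial>M)"
        using pw by (intro nn_integral_mono) auto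
      also have "\<dots> = (\<integral>\<^sup>+s. (\<integral>\<^sup>+\<xi>. FF s \<xi> \<partial>M) \<partial>lborel)"
        by (rule PS.Fubini'[OF FFm])
      also have "\<dots> \<le> (\<integral>\<^sup>+s. ennreal (1 / (2 * ?h)) * ennreal B * indicator {-?h..?h} s \<partial>lborel)"
      proof (intro nn_integral_mono)
        fix s
        show "(\<integral>\<^sup>+\<xi>. FF s \<xi> \<partial>M) \<le> ennreal (1 / (2 * ?h)) * ennreal B * indicator {-?h..?h} s"
        proof (cases "s \<in> {-?h..?h}")
          case True
          then have s1: "\<bar>s\<bar> \<le> 1" using hs_le[of n] \<delta> by auto
          have "(\<integral>\<^sup>+\<xi>. FF s \<xi> \<partial>M) = ennreal (1 / (2 * ?h)) * (\<integral>\<^sup>+\<xi>. ennreal ((sgrad G (x + s *\<^sub>R g) \<xi> \<bullet> g)\<^sup>2) \<partial>M)"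
            unfolding FF_def using True am[of "x + s *\<^sub>R g"] by (subst nn_integral_cmult[symmetric]) (auto, measurable)
          also have "\<dots> \<le> ennreal (1 / (2 * ?h)) * ennreal B"
            using dbnd[OF s1] by (intro mult_left_mono) auto
          finally show ?thesis using True by simp
        next
          case False then show ?thesis by (simp add: FF_def)
        qed
      qed
      also have "\<dots> = ennreal (1 / (2 * ?h)) * ennreal B * ennreal (?h - -?h)"
        by (subst nn_integral_cmult_indicator, simp, subst emeasure_lborel_Icc) (use hs_pos[of n] in auto)
      also have "\<dots> = ennreal B"
      proof -
        have "ennreal (1 / (2 * ?h)) * ennreal (?h - -?h) = 1"
          using hs_pos[of n] by (subst ennreal_mult[symmetric]) auto
        then show ?thesis by (metis mult.assoc mult.commute mult_1)
      qed
      finally show ?thesis .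
    qed
    have A2: "(\<integral>\<^sup>+\<xi>. ennreal ((sgrad G x \<xi> \<bullet> g)\<^sup>2) \<partial>M) \<le> ennreal B"
      using dbnd[of 0] by simp
    have ag_m: "(\<lambda>\<xi>. sgrad G x \<xi> \<bullet> g) \<in> borel_measurable M" using am[of x] by measurable
    have Ai: "integrable M (\<lambda>\<xi>. sgrad G x \<xi> \<bullet> g)"
    proof (rule integrableI_bounded[OF ag_m])
      have "(\<integral>\<^sup>+\<xi>. ennreal (norm (sgrad G x \<xi> \<bullet> g)) \<partial>M) \<le> (\<integral>\<^sup>+\<xi>. 1 + ennreal ((sgrad G x \<xi> \<bullet> g)\<^sup>2) \<partial>M)"
        by (intro nn_integral_mono) (simp add: abs_le_1_sq_enn)
      also have "\<dots> = 1 + (\<integral>\<^sup>+\<xi>. ennreal ((sgrad G x \<xi> \<bullet> g)\<^sup>2) \<partial>M)"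
        using ag_m by (subst nn_integral_add) (auto simp: emeasure_space_1, measurable)
      also have "\<dots> \<le> 1 + ennreal B" using A2 by (intro add_left_mono)
      also have "\<dots> < \<infinity>" by simp
      finally show "(\<integral>\<^sup>+\<xi>. ennreal (norm (sgrad G x \<xi> \<bullet> g)) \<partial>M) < \<infinity>" .
    qed
    have bndQA: "(\<integral>\<^sup>+\<xi>. ennreal ((Q n \<xi> - sgrad G x \<xi> \<bullet> g)\<^sup>2) \<partial>M) \<le> ennreal (4 * B)" for n
    proof -
      have Qm: "Q n \<in> borel_measurable M" using Qi[of n] by auto
      have "(\<integral>\<^sup>+\<xi>. ennreal ((Q n \<xi> - sgrad G x \<xi> \<bullet> g)\<^sup>2) \<partial>M)
          \<le> (\<integral>\<^sup>+\<xi>. ennreal 2 * ennreal ((Q n \<xi>)\<^sup>2) + ennreal 2 * ennreal ((sgrad G x \<xi> \<bullet> g)\<^sup>2) \<partial>M)"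
        by (intro nn_integral_mono ennreal_lin2_le sq_diff_le) auto
      also have "\<dots> = ennreal 2 * (\<integral>\<^sup>+\<xi>. ennreal ((Q n \<xi>)\<^sup>2) \<partial>M) + ennreal 2 * (\<integral>\<^sup>+\<xi>. ennreal ((sgrad G x \<xi> \<bullet> g)\<^sup>2) \<partial>M)"
        using Qm ag_m by (subst nn_integral_add) (auto simp: nn_integral_cmult, measurable)
      also have "\<dots> \<le> ennreal 2 * ennreal B + ennreal 2 * ennreal B"
        using Q2[of n] A2 by (intro add_mono mult_left_mono) auto
      also have "\<dots> = ennreal (2 * B + 2 * B)" by (rule ennreal_lin2_eq) (use B0 in auto)
      also have "\<dots> = ennreal (4 * B)" by simp
      finally show ?thesis .
    qed
    have conv: "(\<lambda>n. \<integral>\<xi>. Q n \<xi> \<partial>M) \<longlonglongrightarrow> (\<integral>\<xi>. sgrad G x \<xi> \<bullet> g \<partial>M)"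
      by (rule L2_conv[OF M Qi Ai Qpt bndQA]) (use B0 in simp)
    have eq: "(\<integral>\<xi>. sgrad G x \<xi> \<bullet> g \<partial>M) = c" using LIMSEQ_unique[OF conv Qlim] .
    have vm: "(\<lambda>\<xi>. (norm (sgrad G x \<xi> - g))\<^sup>2) \<in> borel_measurable M" using am[of x] by measurable
    have vfin: "(\<integral>\<^sup>+\<xi>. ennreal ((norm (sgrad G x \<xi> - g))\<^sup>2) \<partial>M) \<le> ennreal (\<sigma>\<^sup>2)"
      using var[of x] by (simp add: g_def)
    have vi: "integrable M (\<lambda>\<xi>. (norm (sgrad G x \<xi> - g))\<^sup>2)"
    proof (rule integrableI_bounded[OF vm])
      have "(\<integral>\<^sup>+\<xi>. ennreal (norm ((norm (sgrad G x \<xi> - g))\<^sup>2)) \<partial>M) = (\<integral>\<^sup>+\<xi>. ennreal ((norm (sgrad G x \<xi> - g))\<^sup>2) \<partial>M)"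
        by simp
      also have "\<dots> < \<infinity>" using vfin by (simp add: le_less_trans)
      finally show "(\<integral>\<^sup>+\<xi>. ennreal (norm ((norm (sgrad G x \<xi> - g))\<^sup>2)) \<partial>M) < \<infinity>" .
    qed
    have ident: "(norm (sgrad G x \<xi>))\<^sup>2 = (norm (sgrad G x \<xi> - g))\<^sup>2 + 2 * (sgrad G x \<xi> \<bullet> g) - c" for \<xi>
      by (simp add: power2_norm_eq_inner inner_diff_left inner_diff_right inner_commute c_def)
    have a2i: "integrable M (\<lambda>\<xi>. (norm (sgrad G x \<xi>))\<^sup>2)"
      unfolding ident using vi Ai by auto
    have "(\<integral>\<xi>. (norm (sgrad G x \<xi>))\<^sup>2 \<partial>M) = (\<integral>\<xi>. (norm (sgrad G x \<xi> - g))\<^sup>2 \<partial>M) + 2 * c - c"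
      unfolding ident using vi Ai eq by (simp add: prob_space)
    moreover have "(\<integral>\<xi>. (norm (sgrad G x \<xi> - g))\<^sup>2 \<partial>M) \<le> \<sigma>\<^sup>2"
    proof -
      have "ennreal (\<integral>\<xi>. (norm (sgrad G x \<xi> - g))\<^sup>2 \<partial>M) = (\<integral>\<^sup>+\<xi>. ennreal ((norm (sgrad G x \<xi> - g))\<^sup>2) \<partial>M)"
        using vi by (intro nn_integral_eq_integral[symmetric]) auto
      also have "\<dots> \<le> ennreal (\<sigma>\<^sup>2)" by (rule vfin)
      finally show ?thesis by (simp add: ennreal_le_iff)
    qed
    ultimately have "(\<integral>\<xi>. (norm (sgrad G x \<xi>))\<^sup>2 \<partial>M) \<le> \<sigma>\<^sup>2 + c" by linarith
    moreover have "(\<integral>\<^sup>+\<xi>. ennreal ((norm (sgrad G x \<xi>))\<^sup>2) \<partial>M) = ennreal (\<integral>\<xi>. (norm (sgrad G x \<xi>))\<^sup>2 \<partial>M)"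
      using a2i by (intro nn_integral_eq_integral) auto
    moreover have "c = (norm (grad f x))\<^sup>2" by (simp add: c_def g_def power2_norm_eq_inner)
    ultimately show ?thesis by (metis ennreal_leI)
  qed
qed

lemma omega_min_props:
  fixes W :: "real^'n^'n"
  assumes W: "doubly_stochastic_sym W"
  shows "0 < omega_min W" "omega_min W \<le> 1" "\<And>i j. 0 < W$i$j \<Longrightarrow> omega_min W \<le> W$i$j"
    "\<And>i. real (card {j. 0 < W$i$j}) * omega_min W \<le> 1"
proof -
  let ?S = "{W$i$j | i j. 0 < W$i$j}"
  have fin: "finite ?S"
  proof -
    have "?S \<subseteq> (\<lambda>(i,j). W$i$j) ` UNIV" by auto
    then show ?thesis by (rule finite_subset) simp
  qed
  have nn: "\<And>i j. 0 \<le> W$i$j" and le1: "\<And>i j. W$i$j \<le> 1" and rs: "\<And>i. (\<Sum>j\<in>UNIV. W$i$j) = 1"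
    using W by (auto simp: doubly_stochastic_sym_def)
  have ne: "?S \<noteq> {}"
  proof
    assume "?S = {}"
    then have "\<And>j. W$i$j = 0" for i using nn by (metis (mono_tags, lifting) empty_Collect_eq order_less_le)
    then have "(\<Sum>j\<in>UNIV. W$i$j) = 0" for i by simp
    with rs show False by simp
  qed
  have mem: "omega_min W \<in> ?S" unfolding omega_min_def using fin ne by (rule Min_in)
  then show pos: "0 < omega_min W" by auto
  show "omega_min W \<le> 1" using mem le1 by auto
  show le: "\<And>i j. 0 < W$i$j \<Longrightarrow> omega_min W \<le> W$i$j"
    unfolding omega_min_def using fin by (intro Min_le) auto
  show "real (card {j. 0 < W$i$j}) * omega_min W \<le> 1" for i
  proof -
    have "real (card {j. 0 < W$i$j}) * omega_min W = (\<Sum>j\<in>{j. 0 < W$i$j}. omega_min W)" by simp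
    also have "\<dots> \<le> (\<Sum>j\<in>{j. 0 < W$i$j}. W$i$j)" by (intro sum_mono le) auto
    also have "\<dots> \<le> (\<Sum>j\<in>UNIV. W$i$j)" using nn by (intro sum_mono2) auto
    finally show ?thesis using rs by simp
  qed
qed

lemma shap_norm_nonneg:
  assumes "finite M" "j \<in> M"
  shows "0 \<le> shap_norm \<phi> M j"
proof -
  have "Min (\<phi> ` M) \<le> \<phi> j" using assms by (intro Min_le) auto
  moreover have "\<phi> j \<le> Max (\<phi> ` M)" using assms by (intro Max_ge) auto
  ultimately show ?thesis unfolding shap_norm_def by (intro divide_nonneg_nonneg) auto
qed

lemma finite_nbr: "finite (nbr (W::real^'n^'n) i)" by simp

lemma pi_zero:
  assumes "W$i$j = 0"
  shows "ross_pi W F J Q \<gamma> x s i j = 0"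
  using assms by (simp add: ross_pi_def)

lemma pi_bounds:
  fixes W :: "real^'n^'n"
  assumes j: "j \<in> nbr W i" and w: "0 < W$i$j"
  shows "0 \<le> ross_pi W F J Q \<gamma> x s i j" "ross_pi W F J Q \<gamma> x s i j \<le> 1 / W$i$j"
proof -
  let ?M = "nbr W i"
  let ?p = "shap_norm (ross_phi W F J Q \<gamma> x s i) ?M"
  have nn: "\<And>k. k \<in> ?M \<Longrightarrow> 0 \<le> ?p k" by (intro shap_norm_nonneg) auto
  have S0: "0 \<le> (\<Sum>k\<in>?M. ?p k)" using nn by (intro sum_nonneg) auto
  have pj: "?p j \<le> (\<Sum>k\<in>?M. ?p k)" using nn j by (intro member_le_sum) auto
  have eq: "ross_pi W F J Q \<gamma> x s i j = ?p j / (W$i$j * (\<Sum>k\<in>?M. ?p k))" by (simp add: ross_pi_def)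
  show "0 \<le> ross_pi W F J Q \<gamma> x s i j" unfolding eq using nn[OF j] S0 w by simp
  show "ross_pi W F J Q \<gamma> x s i j \<le> 1 / W$i$j"
  proof (cases "(\<Sum>k\<in>?M. ?p k) = 0")
    case True then show ?thesis unfolding eq using w by simp
  next
    case False
    then have Sp: "0 < (\<Sum>k\<in>?M. ?p k)" using S0 by simp
    have "?p j / (W$i$j * (\<Sum>k\<in>?M. ?p k)) = (?p j / (\<Sum>k\<in>?M. ?p k)) / W$i$j" by simp
    also have "\<dots> \<le> 1 / W$i$j" using pj Sp w by (intro divide_right_mono) (auto simp: divide_le_eq_1)
    finally show ?thesis unfolding eq .
  qed
qed

lemma sum_sq_le_card: "(\<Sum>j\<in>P. c j)\<^sup>2 \<le> real (card P) * (\<Sum>j\<in>P. (c j)\<^sup>2)"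
  using Cauchy_Schwarz_ineq_sum[of "\<lambda>_. 1" c P] by simp

lemma gbar_bound:
  fixes W :: "real^'n^'n" and F :: "'v::real_inner \<Rightarrow> 'z \<Rightarrow> real"
  assumes W: "doubly_stochastic_sym W"
  shows "(norm (ross_gbar W F J Q \<gamma> x s i - ross_g F x s i i))\<^sup>2
     \<le> 2 * (1 / omega_min W) ^ 3 * (\<Sum>j\<in>{j. 0 < W$i$j}. (norm (ross_g F x s j i))\<^sup>2) + 2 * (norm (ross_g F x s i i))\<^sup>2"
proof -
  let ?u = "1 / omega_min W"
  let ?P = "{j. 0 < W$i$j}"
  let ?a = "\<lambda>j. ross_g F x s j i"
  let ?pi = "\<lambda>j. ross_pi W F J Q \<gamma> x s i j"
  note om = omega_min_props[OF W]
  have u1: "1 \<le> ?u" using om(1,2) by simp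
  have Psub: "?P \<subseteq> nbr W i" by (auto simp: nbr_def)
  have nnW: "\<And>j. 0 \<le> W$i$j" using W by (auto simp: doubly_stochastic_sym_def)
  have z: "\<forall>j\<in>nbr W i - ?P. ?pi j *\<^sub>R ?a j = 0"
  proof
    fix j assume "j \<in> nbr W i - ?P"
    then have "W$i$j = 0" using nnW[of j] by auto
    then show "?pi j *\<^sub>R ?a j = 0" by (simp add: pi_zero)
  qed
  have gb: "ross_gbar W F J Q \<gamma> x s i = (\<Sum>j\<in>?P. ?pi j *\<^sub>R ?a j)"
    unfolding ross_gbar_def using z Psub by (intro sum.mono_neutral_right) auto
  have pib: "0 \<le> ?pi j \<and> ?pi j \<le> ?u" if "j \<in> ?P" for j
  proof -
    have jn: "j \<in> nbr W i" using that Psub by auto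
    have w: "0 < W$i$j" using that by simp
    have "1 / W$i$j \<le> ?u" using om(1) om(3)[OF w] w by (intro divide_left_mono) auto
    then show ?thesis using pi_bounds[OF jn w, of F J Q \<gamma> x s] by auto
  qed
  have "norm (ross_gbar W F J Q \<gamma> x s i) \<le> (\<Sum>j\<in>?P. norm (?pi j *\<^sub>R ?a j))"
    unfolding gb by (rule norm_sum)
  also have "\<dots> \<le> (\<Sum>j\<in>?P. ?u * norm (?a j))"
  proof (intro sum_mono)
    fix j assume "j \<in> ?P"
    then have "\<bar>?pi j\<bar> \<le> ?u" using pib[of j] by auto
    then have "\<bar>?pi j\<bar> * norm (?a j) \<le> ?u * norm (?a j)" by (rule mult_right_mono) simp
    then show "norm (?pi j *\<^sub>R ?a j) \<le> ?u * norm (?a j)" by simp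
  qed
  finally have n1: "norm (ross_gbar W F J Q \<gamma> x s i) \<le> (\<Sum>j\<in>?P. ?u * norm (?a j))" .
  have "(norm (ross_gbar W F J Q \<gamma> x s i))\<^sup>2 \<le> (\<Sum>j\<in>?P. ?u * norm (?a j))\<^sup>2"
    using n1 by (intro power_mono) auto
  also have "\<dots> \<le> real (card ?P) * (\<Sum>j\<in>?P. (?u * norm (?a j))\<^sup>2)" by (rule sum_sq_le_card)
  also have "\<dots> = real (card ?P) * ?u\<^sup>2 * (\<Sum>j\<in>?P. (norm (?a j))\<^sup>2)"
    by (simp add: power_mult_distrib sum_distrib_left mult.assoc power_divide)
  also have "\<dots> \<le> ?u * ?u\<^sup>2 * (\<Sum>j\<in>?P. (norm (?a j))\<^sup>2)"
  proof -
    have "real (card ?P) \<le> ?u" using om(4)[of i] om(1) by (simp add: field_simps)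
    then show ?thesis by (intro mult_right_mono) (auto intro: sum_nonneg)
  qed
  finally have g2: "(norm (ross_gbar W F J Q \<gamma> x s i))\<^sup>2 \<le> ?u ^ 3 * (\<Sum>j\<in>?P. (norm (?a j))\<^sup>2)"
    by (simp add: power3_eq_cube power2_eq_square mult.assoc)
  have "norm (ross_gbar W F J Q \<gamma> x s i - ?a i) \<le> norm (ross_gbar W F J Q \<gamma> x s i) + norm (?a i)"
    by (rule norm_triangle_ineq4)
  then have "(norm (ross_gbar W F J Q \<gamma> x s i - ?a i))\<^sup>2 \<le> (norm (ross_gbar W F J Q \<gamma> x s i) + norm (?a i))\<^sup>2"
    by (intro power_mono) auto
  also have "\<dots> \<le> 2 * (norm (ross_gbar W F J Q \<gamma> x s i))\<^sup>2 + 2 * (norm (?a i))\<^sup>2" by (rule sq_add_le)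
  also have "\<dots> \<le> 2 * (?u ^ 3 * (\<Sum>j\<in>?P. (norm (?a j))\<^sup>2)) + 2 * (norm (?a i))\<^sup>2" using g2 by simp
  finally show ?thesis by (simp add: mult.assoc)
qed

lemma frob_cols_sq:
  fixes v w :: "'n::finite \<Rightarrow> real^'d"
  shows "(frob_norm (cols_mat v - cols_mat w))\<^sup>2 = (\<Sum>c\<in>UNIV. (norm (v c - w c))\<^sup>2)"
proof -
  have "(frob_norm (cols_mat v - cols_mat w))\<^sup>2 = (\<Sum>r\<in>UNIV. \<Sum>c\<in>UNIV. ((v c - w c)$r)\<^sup>2)"
    unfolding frob_norm_def cols_mat_def by (simp add: sum_nonneg)
  also have "\<dots> = (\<Sum>c\<in>UNIV. \<Sum>r\<in>UNIV. ((v c - w c)$r)\<^sup>2)" by (rule sum.swap)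
  also have "\<dots> = (\<Sum>c\<in>UNIV. (norm (v c - w c))\<^sup>2)"
    by (simp add: norm_vec_def L2_set_def sum_nonneg)
  finally show ?thesis .
qed

lemma ross_state_local:
  assumes "\<And>r i. 1 \<le> r \<Longrightarrow> r \<le> s \<Longrightarrow> \<omega> (r, i) = \<omega>' (r, i)"
  shows "ross_state W F J Q \<gamma> \<alpha> x0 (\<lambda>r i. \<omega> (r, i)) s = ross_state W F J Q \<gamma> \<alpha> x0 (\<lambda>r i. \<omega>' (r, i)) s"
  using assms
proof (induction s)
  case 0 then show ?case by simp
next
  case (Suc t)
  have IH: "ross_state W F J Q \<gamma> \<alpha> x0 (\<lambda>r i. \<omega> (r, i)) t = ross_state W F J Q \<gamma> \<alpha> x0 (\<lambda>r i. \<omega>' (r, i)) t"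
    using Suc.prems by (intro Suc.IH) auto
  have "(\<lambda>i. \<omega> (Suc t, i)) = (\<lambda>i. \<omega>' (Suc t, i))" using Suc.prems by auto
  then show ?case using IH by simp
qed

context
  fixes W :: "real^'n^'n" and F :: "real^'d \<Rightarrow> 'z \<Rightarrow> real" and J :: "'z \<Rightarrow> real^'d \<Rightarrow> real"
    and Q :: "'z set" and D :: "'n \<Rightarrow> 'z measure" and M :: "'a measure" and \<gamma> :: real
  assumes meas_grad: "\<And>i. (\<lambda>p. sgrad F (fst p) (snd p)) \<in> borel_measurable (borel \<Otimes>\<^sub>M D i)"
    and meas_J: "\<And>\<xi>. \<xi> \<in> Q \<Longrightarrow> J \<xi> \<in> borel_measurable borel"
    and Qfin: "finite Q"
begin

lemma g_meas:
  assumes X: "\<And>j. (\<lambda>\<omega>. X \<omega> j) \<in> borel_measurable M" and S: "\<And>i. (\<lambda>\<omega>. S \<omega> i) \<in> measurable M (D i)"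
  shows "(\<lambda>\<omega>. ross_g F (X \<omega>) (S \<omega>) j i) \<in> borel_measurable M"
proof -
  have "(\<lambda>\<omega>. (X \<omega> i, S \<omega> j)) \<in> measurable M (borel \<Otimes>\<^sub>M D j)"
    using X S by (intro measurable_Pair) auto
  from measurable_compose[OF this meas_grad[of j]] show ?thesis by (simp add: ross_g_def)
qed

lemma loc_meas:
  assumes X: "\<And>j. (\<lambda>\<omega>. X \<omega> j) \<in> borel_measurable M" and S: "\<And>i. (\<lambda>\<omega>. S \<omega> i) \<in> measurable M (D i)"
  shows "(\<lambda>\<omega>. ross_loc F \<gamma> (X \<omega>) (S \<omega>) i j) \<in> borel_measurable M"
proof -
  note [measurable] = X g_meas[OF X S]
  show ?thesis unfolding ross_loc_def by measurable
qed

lemma coal_meas: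
  assumes X: "\<And>j. (\<lambda>\<omega>. X \<omega> j) \<in> borel_measurable M" and S: "\<And>i. (\<lambda>\<omega>. S \<omega> i) \<in> measurable M (D i)"
  shows "(\<lambda>\<omega>. coal_val J Q (ross_loc F \<gamma> (X \<omega>) (S \<omega>) i) T) \<in> borel_measurable M"
proof (cases "T = {}")
  case True then show ?thesis by (simp add: coal_val_def)
next
  case False
  let ?m = "\<lambda>\<omega>. (1 / real (card T)) *\<^sub>R (\<Sum>j\<in>T. ross_loc F \<gamma> (X \<omega>) (S \<omega>) i j)"
  have mm: "?m \<in> borel_measurable M"
    using loc_meas[OF X S] by (intro borel_measurable_scaleR borel_measurable_const borel_measurable_sum) auto
  have "(\<lambda>\<omega>. J \<xi> (?m \<omega>)) \<in> borel_measurable M" if "\<xi> \<in> Q" for \<xi>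
    using measurable_compose[OF mm meas_J[OF that]] by (simp add: comp_def)
  then have "(\<lambda>\<omega>. (\<Sum>\<xi>\<in>Q. J \<xi> (?m \<omega>)) / real (card Q)) \<in> borel_measurable M"
    by (intro borel_measurable_divide borel_measurable_sum borel_measurable_const) auto
  then show ?thesis using False by (simp add: coal_val_def)
qed

lemma phi_meas:
  assumes X: "\<And>j. (\<lambda>\<omega>. X \<omega> j) \<in> borel_measurable M" and S: "\<And>i. (\<lambda>\<omega>. S \<omega> i) \<in> measurable M (D i)"
  shows "(\<lambda>\<omega>. ross_phi W F J Q \<gamma> (X \<omega>) (S \<omega>) i j) \<in> borel_measurable M"
  unfolding ross_phi_def shapley_def
  using coal_meas[OF X S]
  by (intro borel_measurable_sum borel_measurable_divide borel_measurable_diff borel_measurable_const) auto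

lemma pi_meas:
  assumes X: "\<And>j. (\<lambda>\<omega>. X \<omega> j) \<in> borel_measurable M" and S: "\<And>i. (\<lambda>\<omega>. S \<omega> i) \<in> measurable M (D i)"
  shows "(\<lambda>\<omega>. ross_pi W F J Q \<gamma> (X \<omega>) (S \<omega>) i j) \<in> borel_measurable M"
proof -
  have P: "\<And>k. (\<lambda>\<omega>. ross_phi W F J Q \<gamma> (X \<omega>) (S \<omega>) i k) \<in> borel_measurable M" using phi_meas[OF X S] .
  have mn: "(\<lambda>\<omega>. Min ((\<lambda>k. ross_phi W F J Q \<gamma> (X \<omega>) (S \<omega>) i k) ` nbr W i)) \<in> borel_measurable M"
    using P by (intro borel_measurable_Min) auto
  have mx: "(\<lambda>\<omega>. Max ((\<lambda>k. ross_phi W F J Q \<gamma> (X \<omega>) (S \<omega>) i k) ` nbr W i)) \<in> borel_measurable M"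
    using P by (intro borel_measurable_Max) auto
  have N: "(\<lambda>\<omega>. shap_norm (ross_phi W F J Q \<gamma> (X \<omega>) (S \<omega>) i) (nbr W i) k) \<in> borel_measurable M" for k
    unfolding shap_norm_def using P mn mx by (intro borel_measurable_divide borel_measurable_diff) auto
  show ?thesis unfolding ross_pi_def
    using N by (intro borel_measurable_divide borel_measurable_times borel_measurable_sum borel_measurable_const) auto
qed

lemma gbar_meas:
  assumes X: "\<And>j. (\<lambda>\<omega>. X \<omega> j) \<in> borel_measurable M" and S: "\<And>i. (\<lambda>\<omega>. S \<omega> i) \<in> measurable M (D i)"
  shows "(\<lambda>\<omega>. ross_gbar W F J Q \<gamma> (X \<omega>) (S \<omega>) i) \<in> borel_measurable M"
  unfolding ross_gbar_def using pi_meas[OF X S] g_meas[OF X S]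
  by (intro borel_measurable_sum borel_measurable_scaleR) auto

lemma step_meas:
  assumes X: "\<And>j. (\<lambda>\<omega>. X \<omega> j) \<in> borel_measurable M" and U: "\<And>j. (\<lambda>\<omega>. U \<omega> j) \<in> borel_measurable M"
    and S: "\<And>i. (\<lambda>\<omega>. S \<omega> i) \<in> measurable M (D i)"
  shows "(\<lambda>\<omega>. fst (ross_step W F J Q \<gamma> \<alpha> (X \<omega>, U \<omega>) (S \<omega>)) i) \<in> borel_measurable M"
    "(\<lambda>\<omega>. snd (ross_step W F J Q \<gamma> \<alpha> (X \<omega>, U \<omega>) (S \<omega>)) i) \<in> borel_measurable M"
proof -
  note G = gbar_meas[OF X S]
  have uh: "(\<lambda>\<omega>. \<alpha> *\<^sub>R U \<omega> j + ross_gbar W F J Q \<gamma> (X \<omega>) (S \<omega>) j) \<in> borel_measurable M" for j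
    using U G by (intro borel_measurable_add borel_measurable_scaleR borel_measurable_const) auto
  have xh: "(\<lambda>\<omega>. X \<omega> j - \<gamma> *\<^sub>R (\<alpha> *\<^sub>R U \<omega> j + ross_gbar W F J Q \<gamma> (X \<omega>) (S \<omega>) j)) \<in> borel_measurable M" for j
    using X uh by (intro borel_measurable_diff borel_measurable_scaleR borel_measurable_const) auto
  have e1: "fst (ross_step W F J Q \<gamma> \<alpha> (X \<omega>, U \<omega>) (S \<omega>)) i = (\<Sum>j\<in>nbr W i. W$i$j *\<^sub>R (X \<omega> j - \<gamma> *\<^sub>R (\<alpha> *\<^sub>R U \<omega> j + ross_gbar W F J Q \<gamma> (X \<omega>) (S \<omega>) j)))" for \<omega>
    by (simp add: ross_step_def Let_def)
  have e2: "snd (ross_step W F J Q \<gamma> \<alpha> (X \<omega>, U \<omega>) (S \<omega>)) i = (\<Sum>j\<in>nbr W i. W$i$j *\<^sub>R (\<alpha> *\<^sub>R U \<omega> j + ross_gbar W F J Q \<gamma> (X \<omega>) (S \<omega>) j))" for \<omega>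
    by (simp add: ross_step_def Let_def)
  show "(\<lambda>\<omega>. fst (ross_step W F J Q \<gamma> \<alpha> (X \<omega>, U \<omega>) (S \<omega>)) i) \<in> borel_measurable M"
    unfolding e1 using xh by (intro borel_measurable_sum borel_measurable_scaleR borel_measurable_const) auto
  show "(\<lambda>\<omega>. snd (ross_step W F J Q \<gamma> \<alpha> (X \<omega>, U \<omega>) (S \<omega>)) i) \<in> borel_measurable M"
    unfolding e2 using uh by (intro borel_measurable_sum borel_measurable_scaleR borel_measurable_const) auto
qed

end

lemma state_meas:
  fixes W :: "real^'n^'n" and F :: "real^'d \<Rightarrow> 'z \<Rightarrow> real" and J :: "'z \<Rightarrow> real^'d \<Rightarrow> real"
    and D :: "'n \<Rightarrow> 'z measure"
  assumes meas_grad: "\<And>i. (\<lambda>p. sgrad F (fst p) (snd p)) \<in> borel_measurable (borel \<Otimes>\<^sub>M D i)"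
    and meas_J: "\<And>\<xi>. \<xi> \<in> Q \<Longrightarrow> J \<xi> \<in> borel_measurable borel"
    and Qfin: "finite Q"
    and I: "\<And>r i. 1 \<le> r \<Longrightarrow> r \<le> s \<Longrightarrow> (r, i) \<in> I"
  shows "(\<lambda>\<omega>. fst (ross_state W F J Q \<gamma> \<alpha> x0 (\<lambda>r i. \<omega> (r, i)) s) i) \<in> borel_measurable (PiM I (\<lambda>p. D (snd p)))
    \<and> (\<lambda>\<omega>. snd (ross_state W F J Q \<gamma> \<alpha> x0 (\<lambda>r i. \<omega> (r, i)) s) i) \<in> borel_measurable (PiM I (\<lambda>p. D (snd p)))"
  using I
proof (induction s arbitrary: i)
  case 0 then show ?case by simp
next
  case (Suc t)
  let ?P = "PiM I (\<lambda>p. D (snd p))"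
  have X: "(\<lambda>\<omega>. fst (ross_state W F J Q \<gamma> \<alpha> x0 (\<lambda>r i. \<omega> (r, i)) t) j) \<in> borel_measurable ?P"
    and U: "(\<lambda>\<omega>. snd (ross_state W F J Q \<gamma> \<alpha> x0 (\<lambda>r i. \<omega> (r, i)) t) j) \<in> borel_measurable ?P" for j
    using Suc.IH[of j] Suc.prems by auto
  have S: "(\<lambda>\<omega>. \<omega> (Suc t, k)) \<in> measurable ?P (D k)" for k
  proof -
    have "(Suc t, k) \<in> I" using Suc.prems by auto
    from measurable_component_singleton[OF this, of "\<lambda>p. D (snd p)"] show ?thesis by simp
  qed
  have eq: "ross_state W F J Q \<gamma> \<alpha> x0 (\<lambda>r i. \<omega> (r, i)) (Suc t)
      = ross_step W F J Q \<gamma> \<alpha> (fst (ross_state W F J Q \<gamma> \<alpha> x0 (\<lambda>r i. \<omega> (r, i)) t), snd (ross_state W F J Q \<gamma> \<alpha> x0 (\<lambda>r i. \<omega> (r, i)) t)) (\<lambda>k. \<omega> (Suc t, k))" for \<omega>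
    by simp
  let ?X = "\<lambda>\<omega>. fst (ross_state W F J Q \<gamma> \<alpha> x0 (\<lambda>r i. \<omega> (r, i)) t)"
  let ?U = "\<lambda>\<omega>. snd (ross_state W F J Q \<gamma> \<alpha> x0 (\<lambda>r i. \<omega> (r, i)) t)"
  let ?S = "\<lambda>\<omega> k. \<omega> (Suc t, k)"
  have A: "(\<lambda>\<omega>. fst (ross_step W F J Q \<gamma> \<alpha> (?X \<omega>, ?U \<omega>) (?S \<omega>)) i) \<in> borel_measurable ?P"
    by (rule step_meas(1)[where W=W and F=F and J=J and Q=Q and D=D and \<gamma>=\<gamma> and M="?P" and X="?X" and U="?U" and S="?S", OF meas_grad meas_J Qfin X U S])
  have B: "(\<lambda>\<omega>. snd (ross_step W F J Q \<gamma> \<alpha> (?X \<omega>, ?U \<omega>) (?S \<omega>)) i) \<in> borel_measurable ?P"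
    by (rule step_meas(2)[where W=W and F=F and J=J and Q=Q and D=D and \<gamma>=\<gamma> and M="?P" and X="?X" and U="?U" and S="?S", OF meas_grad meas_J Qfin X U S])
  show ?case unfolding eq using A B by simp
qed

lemma indep_round:
  fixes Dm :: "'n \<Rightarrow> 'z measure" and p0 :: "'i \<times> 'n" and X :: "('i \<times> 'n \<Rightarrow> 'z) \<Rightarrow> 'v::topological_space"
    and h :: "'v \<Rightarrow> 'z \<Rightarrow> ennreal"
  assumes D: "\<And>i. prob_space (Dm i)"
    and Xm: "X \<in> borel_measurable (PiM (UNIV - {p0}) (\<lambda>p. Dm (snd p)))"
    and Xm': "X \<in> borel_measurable (PiM UNIV (\<lambda>p. Dm (snd p)))"
    and Xloc: "\<And>\<omega> y. X (fun_upd \<omega> p0 y) = X \<omega>"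
    and hm: "case_prod h \<in> borel_measurable (borel \<Otimes>\<^sub>M Dm (snd p0))"
  shows "(\<integral>\<^sup>+\<omega>. h (X \<omega>) (\<omega> p0) \<partial>PiM UNIV (\<lambda>p. Dm (snd p)))
       = (\<integral>\<^sup>+\<omega>. (\<integral>\<^sup>+\<xi>. h (X \<omega>) \<xi> \<partial>Dm (snd p0)) \<partial>PiM UNIV (\<lambda>p. Dm (snd p)))"
proof -
  let ?Mp = "\<lambda>p. Dm (snd p)"
  let ?I = "UNIV - {p0}"
  let ?P = "PiM UNIV ?Mp"
  let ?P' = "PiM ?I ?Mp"
  let ?T = "\<lambda>(x, \<omega>). fun_upd \<omega> p0 x"
  interpret D0: prob_space "Dm (snd p0)" by (rule D)
  interpret P': prob_space ?P' by (intro prob_space_PiM D)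
  interpret PS: pair_sigma_finite "Dm (snd p0)" ?P'
    unfolding pair_sigma_finite_def using prob_space_imp_sigma_finite D by (metis P'.prob_space_axioms)
  have ins: "insert p0 ?I = UNIV" by auto
  have distr: "distr (Dm (snd p0) \<Otimes>\<^sub>M ?P') ?P ?T = ?P"
    using distr_pair_PiM_eq_PiM[of ?I ?Mp p0] D unfolding ins by auto
  have Tm: "?T \<in> measurable (Dm (snd p0) \<Otimes>\<^sub>M ?P') ?P"
  proof -
    have "(\<lambda>z. (snd z)(p0 := fst z)) \<in> measurable (Dm (snd p0) \<Otimes>\<^sub>M ?P') (PiM (?I \<union> {p0}) ?Mp)"
      by (rule measurable_fun_upd[OF refl]) auto
    moreover have "?I \<union> {p0} = UNIV" by auto
    ultimately show ?thesis by (simp add: case_prod_beta')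
  qed
  have comp: "(\<lambda>\<omega>. \<omega> p0) \<in> measurable ?P (Dm (snd p0))"
    using measurable_component_singleton[of p0 UNIV ?Mp] by simp
  have Hm: "(\<lambda>\<omega>. h (X \<omega>) (\<omega> p0)) \<in> borel_measurable ?P"
  proof -
    have "(\<lambda>\<omega>. (X \<omega>, \<omega> p0)) \<in> measurable ?P (borel \<Otimes>\<^sub>M Dm (snd p0))"
      using Xm' comp by (intro measurable_Pair) auto
    from measurable_compose[OF this hm] show ?thesis by simp
  qed
  have Km0: "(\<lambda>y. \<integral>\<^sup>+\<xi>. h y \<xi> \<partial>Dm (snd p0)) \<in> borel_measurable borel"
    using D0.borel_measurable_nn_integral[OF hm] .
  have Km: "(\<lambda>\<omega>. \<integral>\<^sup>+\<xi>. h (X \<omega>) \<xi> \<partial>Dm (snd p0)) \<in> borel_measurable ?P"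
    using measurable_compose[OF Xm' Km0] by simp
  have Km': "(\<lambda>\<omega>. \<integral>\<^sup>+\<xi>. h (X \<omega>) \<xi> \<partial>Dm (snd p0)) \<in> borel_measurable ?P'"
    using measurable_compose[OF Xm Km0] by simp
  have pair1: "(\<lambda>z. h (X (snd z)) (fst z)) \<in> borel_measurable (Dm (snd p0) \<Otimes>\<^sub>M ?P')"
  proof -
    have "(\<lambda>z. (X (snd z), fst z)) \<in> measurable (Dm (snd p0) \<Otimes>\<^sub>M ?P') (borel \<Otimes>\<^sub>M Dm (snd p0))"
      using measurable_compose[OF measurable_snd Xm] by (intro measurable_Pair) auto
    from measurable_compose[OF this hm] show ?thesis by simp
  qed
  have pair2: "(\<lambda>z. \<integral>\<^sup>+\<xi>. h (X (snd z)) \<xi> \<partial>Dm (snd p0)) \<in> borel_measurable (Dm (snd p0) \<Otimes>\<^sub>M ?P')"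
    by (rule measurable_compose[OF measurable_snd Km'])
  have "(\<integral>\<^sup>+\<omega>. h (X \<omega>) (\<omega> p0) \<partial>?P) = (\<integral>\<^sup>+\<omega>. h (X \<omega>) (\<omega> p0) \<partial>distr (Dm (snd p0) \<Otimes>\<^sub>M ?P') ?P ?T)"
    by (simp add: distr)
  also have "\<dots> = (\<integral>\<^sup>+z. h (X (?T z)) (?T z p0) \<partial>(Dm (snd p0) \<Otimes>\<^sub>M ?P'))"
    by (rule nn_integral_distr[OF Tm]) (use Hm in simp)
  also have "\<dots> = (\<integral>\<^sup>+z. h (X (snd z)) (fst z) \<partial>(Dm (snd p0) \<Otimes>\<^sub>M ?P'))"
    by (intro nn_integral_cong) (auto simp: Xloc split: prod.split)
  also have "\<dots> = (\<integral>\<^sup>+\<omega>. (\<integral>\<^sup>+x. h (X \<omega>) x \<partial>Dm (snd p0)) \<partial>?P')"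
    using PS.nn_integral_snd[OF pair1] by simp
  also have "\<dots> = (\<integral>\<^sup>+z. (\<integral>\<^sup>+\<xi>. h (X (snd z)) \<xi> \<partial>Dm (snd p0)) \<partial>(Dm (snd p0) \<Otimes>\<^sub>M ?P'))"
    using PS.nn_integral_snd[OF pair2] by (simp add: D0.emeasure_space_1)
  also have "\<dots> = (\<integral>\<^sup>+z. (\<integral>\<^sup>+\<xi>. h (X (?T z)) \<xi> \<partial>Dm (snd p0)) \<partial>(Dm (snd p0) \<Otimes>\<^sub>M ?P'))"
    by (intro nn_integral_cong) (auto simp: Xloc split: prod.split)
  also have "\<dots> = (\<integral>\<^sup>+\<omega>. (\<integral>\<^sup>+\<xi>. h (X \<omega>) \<xi> \<partial>Dm (snd p0)) \<partial>distr (Dm (snd p0) \<Otimes>\<^sub>M ?P') ?P ?T)"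
    by (rule nn_integral_distr[OF Tm, symmetric]) (use Km in simp)
  also have "\<dots> = (\<integral>\<^sup>+\<omega>. (\<integral>\<^sup>+\<xi>. h (X \<omega>) \<xi> \<partial>Dm (snd p0)) \<partial>?P)"
    by (simp add: distr)
  finally show ?thesis .
qed

lemma norm_avg_sq:
  fixes v :: "'i \<Rightarrow> 'a::real_normed_vector"
  assumes "finite K" "K \<noteq> {}"
  shows "(norm ((1 / real (card K)) *\<^sub>R (\<Sum>k\<in>K. v k)))\<^sup>2 \<le> (1 / real (card K)) * (\<Sum>k\<in>K. (norm (v k))\<^sup>2)"
proof -
  let ?n = "real (card K)"
  have n: "0 < ?n" using assms by (simp add: card_gt_0_iff)
  have "norm (\<Sum>k\<in>K. v k) \<le> (\<Sum>k\<in>K. norm (v k))" by (rule norm_sum)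
  then have "(norm (\<Sum>k\<in>K. v k))\<^sup>2 \<le> (\<Sum>k\<in>K. norm (v k))\<^sup>2" by (intro power_mono) auto
  also have "\<dots> \<le> ?n * (\<Sum>k\<in>K. (norm (v k))\<^sup>2)"
    using Cauchy_Schwarz_ineq_sum[of "\<lambda>_. 1" "\<lambda>k. norm (v k)" K] by simp
  finally have 1: "(norm (\<Sum>k\<in>K. v k))\<^sup>2 \<le> ?n * (\<Sum>k\<in>K. (norm (v k))\<^sup>2)" .
  have "(norm ((1 / ?n) *\<^sub>R (\<Sum>k\<in>K. v k)))\<^sup>2 = (1 / ?n)\<^sup>2 * (norm (\<Sum>k\<in>K. v k))\<^sup>2"
    using n by (simp add: power_mult_distrib power_divide)
  also have "\<dots> \<le> (1 / ?n)\<^sup>2 * (?n * (\<Sum>k\<in>K. (norm (v k))\<^sup>2))" using 1 by (intro mult_left_mono) auto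
  also have "\<dots> = (1 / ?n) * (\<Sum>k\<in>K. (norm (v k))\<^sup>2)" using n by (simp add: power2_eq_square field_simps)
  finally show ?thesis .
qed

lemma pairwise_sq:
  fixes y :: "'n::finite \<Rightarrow> 'a::real_inner"
  shows "(\<Sum>i\<in>UNIV. \<Sum>k\<in>UNIV. (norm (y i - y k))\<^sup>2) \<le> 2 * real CARD('n) * (\<Sum>i\<in>UNIV. (norm (y i))\<^sup>2)"
proof -
  have e: "(norm (y i - y k))\<^sup>2 = (norm (y i))\<^sup>2 + (norm (y k))\<^sup>2 - 2 * (y i \<bullet> y k)" for i k
    by (simp add: power2_norm_eq_inner inner_diff_left inner_diff_right inner_commute)
  have s: "(\<Sum>i\<in>UNIV. \<Sum>k\<in>UNIV. y i \<bullet> y k) = (\<Sum>i\<in>UNIV. y i) \<bullet> (\<Sum>k\<in>UNIV. y k)"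
  proof -
    have "(\<Sum>i\<in>UNIV. y i) \<bullet> (\<Sum>k\<in>UNIV. y k) = (\<Sum>i\<in>UNIV. y i \<bullet> (\<Sum>k\<in>UNIV. y k))" by (rule inner_sum_left)
    also have "\<dots> = (\<Sum>i\<in>UNIV. \<Sum>k\<in>UNIV. y i \<bullet> y k)" by (simp only: inner_sum_right)
    finally show ?thesis by simp
  qed
  have "(\<Sum>i\<in>UNIV. \<Sum>k\<in>UNIV. (norm (y i - y k))\<^sup>2)
      = 2 * real CARD('n) * (\<Sum>i\<in>UNIV. (norm (y i))\<^sup>2) - 2 * (\<Sum>i\<in>UNIV. \<Sum>k\<in>UNIV. y i \<bullet> y k)"
    unfolding e by (simp add: sum.distrib sum_subtractf sum_distrib_left[symmetric] sum.swap[of "\<lambda>i k. (norm (y k))\<^sup>2"] algebra_simps)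
  also have "\<dots> \<le> 2 * real CARD('n) * (\<Sum>i\<in>UNIV. (norm (y i))\<^sup>2)"
    unfolding s by simp
  finally show ?thesis .
qed

lemma det_bound:
  fixes x :: "'n::finite \<Rightarrow> real^'d" and gf :: "'n \<Rightarrow> real^'d \<Rightarrow> real^'d" and GF :: "real^'d \<Rightarrow> real^'d"
    and P :: "'n \<Rightarrow> 'n set" and \<omega> \<sigma> \<zeta> L :: real
  assumes GFdef: "\<And>y. GF y = (1 / real CARD('n)) *\<^sub>R (\<Sum>j\<in>UNIV. gf j y)"
    and het: "\<And>j y. (norm (gf j y - GF y))\<^sup>2 \<le> \<zeta>\<^sup>2"
    and lip: "\<And>j y z. norm (gf j y - gf j z) \<le> L * norm (y - z)"
    and card: "\<And>i. real (card (P i)) * \<omega> \<le> 1" and \<omega>: "0 < \<omega>" "\<omega> \<le> 1"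
  shows "(\<Sum>i\<in>UNIV. 2 * (1/\<omega>)^3 * (\<Sum>j\<in>P i. \<sigma>\<^sup>2 + (norm (gf j (x i)))\<^sup>2) + 2 * (\<sigma>\<^sup>2 + (norm (gf i (x i)))\<^sup>2))
    \<le> (2 * CARD('n) * \<sigma>\<^sup>2 / \<omega> ^ 4 + 2 * CARD('n) * \<sigma>\<^sup>2 + 8 * CARD('n) * \<zeta>\<^sup>2 / \<omega> ^ 4 + 8 * CARD('n) * \<zeta>\<^sup>2)
      + (16 * L\<^sup>2 / \<omega> ^ 4 + 16 * L\<^sup>2) * (\<Sum>i\<in>UNIV. (norm (x i - (1 / real CARD('n)) *\<^sub>R (\<Sum>k\<in>UNIV. x k)))\<^sup>2)
      + (8 * CARD('n) / \<omega> ^ 4 + 8 * CARD('n)) * (norm ((1 / real CARD('n)) *\<^sub>R (\<Sum>i\<in>UNIV. gf i (x i))))\<^sup>2"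
proof -
  let ?N = "real CARD('n)"
  let ?u = "1 / \<omega>"
  have N: "0 < ?N" by simp
  have u1: "1 \<le> ?u" using \<omega> by simp
  define avg where "avg = (1 / ?N) *\<^sub>R (\<Sum>i\<in>UNIV. gf i (x i))"
  define A where "A = (norm avg)\<^sup>2"
  define xb where "xb = (1 / ?N) *\<^sub>R (\<Sum>k\<in>UNIV. x k)"
  define S where "S = (\<Sum>i\<in>UNIV. (norm (x i - xb))\<^sup>2)"
  define G where "G i = (norm (GF (x i)))\<^sup>2" for i
  have A0: "0 \<le> A" and S0: "0 \<le> S" by (auto simp: A_def S_def intro: sum_nonneg)
  have G0: "0 \<le> G i" for i by (simp add: G_def)
  have ma: "(norm (gf j (x i)))\<^sup>2 \<le> 2 * \<zeta>\<^sup>2 + 2 * G i" for j i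
  proof -
    have "norm (gf j (x i)) \<le> norm (gf j (x i) - GF (x i)) + norm (GF (x i))"
      using norm_triangle_ineq[of "gf j (x i) - GF (x i)" "GF (x i)"] by simp
    then have "(norm (gf j (x i)))\<^sup>2 \<le> (norm (gf j (x i) - GF (x i)) + norm (GF (x i)))\<^sup>2" by (intro power_mono) auto
    also have "\<dots> \<le> 2 * (norm (gf j (x i) - GF (x i)))\<^sup>2 + 2 * (norm (GF (x i)))\<^sup>2" by (rule sq_add_le)
    also have "\<dots> \<le> 2 * \<zeta>\<^sup>2 + 2 * G i" using het[of j "x i"] by (simp add: G_def)
    finally show ?thesis .
  qed
  have Gi: "G i \<le> 2 * A + 2 * (1 / ?N) * (\<Sum>k\<in>UNIV. L\<^sup>2 * (norm (x i - x k))\<^sup>2)" for i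
  proof -
    have d: "GF (x i) - avg = (1 / ?N) *\<^sub>R (\<Sum>k\<in>UNIV. gf k (x i) - gf k (x k))"
      unfolding GFdef avg_def by (simp add: sum_subtractf scaleR_diff_right)
    have "norm (GF (x i)) \<le> norm (GF (x i) - avg) + norm avg"
      using norm_triangle_ineq[of "GF (x i) - avg" avg] by simp
    then have "G i \<le> (norm (GF (x i) - avg) + norm avg)\<^sup>2" unfolding G_def by (intro power_mono) auto
    also have "\<dots> \<le> 2 * (norm (GF (x i) - avg))\<^sup>2 + 2 * A" unfolding A_def using sq_add_le by simp
    also have "(norm (GF (x i) - avg))\<^sup>2 \<le> (1 / ?N) * (\<Sum>k\<in>UNIV. (norm (gf k (x i) - gf k (x k)))\<^sup>2)"
      unfolding d using norm_avg_sq[of UNIV "\<lambda>k. gf k (x i) - gf k (x k)"] by simp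
    also have "\<dots> \<le> (1 / ?N) * (\<Sum>k\<in>UNIV. L\<^sup>2 * (norm (x i - x k))\<^sup>2)"
    proof -
      have "(norm (gf k (x i) - gf k (x k)))\<^sup>2 \<le> L\<^sup>2 * (norm (x i - x k))\<^sup>2" for k
      proof -
        have "(norm (gf k (x i) - gf k (x k)))\<^sup>2 \<le> (L * norm (x i - x k))\<^sup>2"
          using lip[of k "x i" "x k"] by (intro power_mono) auto
        then show ?thesis by (simp add: power_mult_distrib)
      qed
      then show ?thesis by (intro mult_left_mono sum_mono) auto
    qed
    finally show ?thesis by simp
  qed
  have pw: "(\<Sum>i\<in>UNIV. \<Sum>k\<in>UNIV. (norm (x i - x k))\<^sup>2) \<le> 2 * ?N * S"
  proof -
    have "x i - x k = (x i - xb) - (x k - xb)" for i k by simp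
    then have "(\<Sum>i\<in>UNIV. \<Sum>k\<in>UNIV. (norm (x i - x k))\<^sup>2) = (\<Sum>i\<in>UNIV. \<Sum>k\<in>UNIV. (norm ((x i - xb) - (x k - xb)))\<^sup>2)"
      by simp
    also have "\<dots> \<le> 2 * ?N * S" unfolding S_def by (rule pairwise_sq)
    finally show ?thesis .
  qed
  have sumG: "(\<Sum>i\<in>UNIV. G i) \<le> 2 * ?N * A + 4 * L\<^sup>2 * S"
  proof -
    have "(\<Sum>i\<in>UNIV. G i) \<le> (\<Sum>i\<in>UNIV. 2 * A + 2 * (1 / ?N) * (\<Sum>k\<in>UNIV. L\<^sup>2 * (norm (x i - x k))\<^sup>2))"
      by (intro sum_mono Gi)
    also have "\<dots> = 2 * ?N * A + 2 * (1 / ?N) * L\<^sup>2 * (\<Sum>i\<in>UNIV. \<Sum>k\<in>UNIV. (norm (x i - x k))\<^sup>2)"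
      by (simp add: sum.distrib sum_distrib_left[symmetric] mult.assoc sum_divide_distrib[symmetric])
    also have "\<dots> \<le> 2 * ?N * A + 2 * (1 / ?N) * L\<^sup>2 * (2 * ?N * S)"
      using pw by (intro add_left_mono mult_left_mono) auto
    also have "\<dots> = 2 * ?N * A + 4 * L\<^sup>2 * S" using N by (simp add: field_simps)
    finally show ?thesis .
  qed
  have per: "2 * ?u^3 * (\<Sum>j\<in>P i. \<sigma>\<^sup>2 + (norm (gf j (x i)))\<^sup>2) + 2 * (\<sigma>\<^sup>2 + (norm (gf i (x i)))\<^sup>2)
      \<le> (2 * ?u^4 + 2) * (\<sigma>\<^sup>2 + 2 * \<zeta>\<^sup>2 + 2 * G i)" for i
  proof -
    have c: "real (card (P i)) \<le> ?u" using card[of i] \<omega> by (simp add: field_simps)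
    have "(\<Sum>j\<in>P i. \<sigma>\<^sup>2 + (norm (gf j (x i)))\<^sup>2) \<le> (\<Sum>j\<in>P i. \<sigma>\<^sup>2 + 2 * \<zeta>\<^sup>2 + 2 * G i)"
      using ma by (intro sum_mono) (simp add: add_left_mono)
    also have "\<dots> = real (card (P i)) * (\<sigma>\<^sup>2 + 2 * \<zeta>\<^sup>2 + 2 * G i)" by simp
    also have "\<dots> \<le> ?u * (\<sigma>\<^sup>2 + 2 * \<zeta>\<^sup>2 + 2 * G i)" using c G0[of i] by (intro mult_right_mono) auto
    finally have 1: "(\<Sum>j\<in>P i. \<sigma>\<^sup>2 + (norm (gf j (x i)))\<^sup>2) \<le> ?u * (\<sigma>\<^sup>2 + 2 * \<zeta>\<^sup>2 + 2 * G i)" .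
    have u3: "0 \<le> ?u^3" using \<omega> by simp
    have "2 * ?u^3 * (\<Sum>j\<in>P i. \<sigma>\<^sup>2 + (norm (gf j (x i)))\<^sup>2) \<le> 2 * ?u^3 * (?u * (\<sigma>\<^sup>2 + 2 * \<zeta>\<^sup>2 + 2 * G i))"
      using 1 u3 by (intro mult_left_mono) auto
    also have "\<dots> = 2 * ?u^4 * (\<sigma>\<^sup>2 + 2 * \<zeta>\<^sup>2 + 2 * G i)" by (simp add: power_Suc[symmetric] numeral_eq_Suc field_simps)
    finally have 2: "2 * ?u^3 * (\<Sum>j\<in>P i. \<sigma>\<^sup>2 + (norm (gf j (x i)))\<^sup>2) \<le> 2 * ?u^4 * (\<sigma>\<^sup>2 + 2 * \<zeta>\<^sup>2 + 2 * G i)" .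
    have 3: "2 * (\<sigma>\<^sup>2 + (norm (gf i (x i)))\<^sup>2) \<le> 2 * (\<sigma>\<^sup>2 + 2 * \<zeta>\<^sup>2 + 2 * G i)" using ma[of i i] by simp
    show ?thesis using 2 3 by (simp add: algebra_simps)
  qed
  have "(\<Sum>i\<in>UNIV. 2 * ?u^3 * (\<Sum>j\<in>P i. \<sigma>\<^sup>2 + (norm (gf j (x i)))\<^sup>2) + 2 * (\<sigma>\<^sup>2 + (norm (gf i (x i)))\<^sup>2))
      \<le> (\<Sum>i\<in>UNIV. (2 * ?u^4 + 2) * (\<sigma>\<^sup>2 + 2 * \<zeta>\<^sup>2 + 2 * G i))" by (intro sum_mono per)
  also have "\<dots> = (2 * ?u^4 + 2) * (?N * \<sigma>\<^sup>2 + 2 * ?N * \<zeta>\<^sup>2 + 2 * (\<Sum>i\<in>UNIV. G i))"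
    by (simp add: sum.distrib sum_distrib_left[symmetric] sum_distrib_right[symmetric] algebra_simps)
  also have "\<dots> \<le> (2 * ?u^4 + 2) * (?N * \<sigma>\<^sup>2 + 2 * ?N * \<zeta>\<^sup>2 + 2 * (2 * ?N * A + 4 * L\<^sup>2 * S))"
    using sumG u1 by (intro mult_left_mono add_left_mono) auto
  also have "\<dots> \<le> (2 * ?N * \<sigma>\<^sup>2 * ?u^4 + 2 * ?N * \<sigma>\<^sup>2 + 8 * ?N * \<zeta>\<^sup>2 * ?u^4 + 8 * ?N * \<zeta>\<^sup>2)
      + (16 * L\<^sup>2 * ?u^4 + 16 * L\<^sup>2) * S + (8 * ?N * ?u^4 + 8 * ?N) * A"
  proof -
    have "0 \<le> (4 * ?N * ?u^4 + 4 * ?N) * \<zeta>\<^sup>2" using \<omega> by simp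
    then show ?thesis by (simp add: algebra_simps)
  qed
  also have "\<dots> = (2 * CARD('n) * \<sigma>\<^sup>2 / \<omega> ^ 4 + 2 * CARD('n) * \<sigma>\<^sup>2 + 8 * CARD('n) * \<zeta>\<^sup>2 / \<omega> ^ 4 + 8 * CARD('n) * \<zeta>\<^sup>2)
      + (16 * L\<^sup>2 / \<omega> ^ 4 + 16 * L\<^sup>2) * S + (8 * CARD('n) / \<omega> ^ 4 + 8 * CARD('n)) * A"
    by (simp add: power_one_over)
  finally show ?thesis unfolding S_def A_def avg_def xb_def .
qed

lemma grad_avg:
  fixes f :: "'n::finite \<Rightarrow> 'a::euclidean_space \<Rightarrow> real"
  assumes "\<And>i. f i differentiable (at x)"
  shows "grad (\<lambda>x. (1 / real CARD('n)) * (\<Sum>i\<in>UNIV. f i x)) x = (1 / real CARD('n)) *\<^sub>R (\<Sum>i\<in>UNIV. grad (f i) x)"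
proof (rule grad_eqI)
  have "((\<lambda>x. \<Sum>i\<in>UNIV. f i x) has_derivative (\<lambda>h. \<Sum>i\<in>UNIV. grad (f i) x \<bullet> h)) (at x)"
    by (intro has_derivative_sum grad_has_derivative assms)
  then have "((\<lambda>x. (1 / real CARD('n)) * (\<Sum>i\<in>UNIV. f i x)) has_derivative (\<lambda>h. (1 / real CARD('n)) * (\<Sum>i\<in>UNIV. grad (f i) x \<bullet> h))) (at x)"
    by (rule has_derivative_mult_right)
  moreover have "(\<lambda>h. (1 / real CARD('n)) * (\<Sum>i\<in>UNIV. grad (f i) x \<bullet> h)) = (\<lambda>h. ((1 / real CARD('n)) *\<^sub>R (\<Sum>i\<in>UNIV. grad (f i) x)) \<bullet> h)"
    by (simp add: inner_sum_left fun_eq_iff)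
  ultimately show "((\<lambda>x. (1 / real CARD('n)) * (\<Sum>i\<in>UNIV. f i x)) has_derivative (\<lambda>h. ((1 / real CARD('n)) *\<^sub>R (\<Sum>i\<in>UNIV. grad (f i) x)) \<bullet> h)) (at x)"
    by simp
qed

lemma lip_meas:
  fixes g :: "'a::euclidean_space \<Rightarrow> 'b::euclidean_space"
  assumes lip: "\<And>y z. norm (g y - g z) \<le> L * norm (y - z)"
  shows "g \<in> borel_measurable borel"
proof (rule borel_measurable_continuous_onI)
  show "continuous_on UNIV g"
    unfolding continuous_on_iff
  proof (intro ballI allI impI)
    fix x and e :: real assume e: "0 < e"
    show "\<exists>d>0. \<forall>x'\<in>UNIV. dist x' x < d \<longrightarrow> dist (g x') (g x) < e"
    proof (intro exI[of _ "e / (\<bar>L\<bar> + 1)"] conjI ballI impI)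
      show "0 < e / (\<bar>L\<bar> + 1)" using e by (simp add: add_nonneg_pos)
      fix x' assume d: "dist x' x < e / (\<bar>L\<bar> + 1)"
      have "dist (g x') (g x) \<le> L * dist x' x" using lip[of x' x] by (simp add: dist_norm)
      also have "\<dots> \<le> \<bar>L\<bar> * dist x' x" by (simp add: mult_right_mono)
      also have "\<dots> \<le> (\<bar>L\<bar> + 1) * dist x' x" by (simp add: mult_right_mono)
      also have "\<dots> < (\<bar>L\<bar> + 1) * (e / (\<bar>L\<bar> + 1))" using d by (intro mult_strict_left_mono) (auto simp: add_nonneg_pos)
      also have "\<dots> = e" by (simp add: add_nonneg_pos)
      finally show "dist (g x') (g x) < e" .
    qed
  qed
qed

lemma nn_sum_mono:
  fixes \<phi> \<psi> :: "'k \<Rightarrow> 'a \<Rightarrow> real"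
  assumes fin: "finite K"
    and \<phi>m: "\<And>k. k \<in> K \<Longrightarrow> (\<lambda>\<omega>. \<phi> k \<omega>) \<in> borel_measurable M"
    and \<psi>m: "\<And>k. k \<in> K \<Longrightarrow> (\<lambda>\<omega>. \<psi> k \<omega>) \<in> borel_measurable M"
    and \<phi>0: "\<And>k \<omega>. k \<in> K \<Longrightarrow> 0 \<le> \<phi> k \<omega>" and \<psi>0: "\<And>k \<omega>. k \<in> K \<Longrightarrow> 0 \<le> \<psi> k \<omega>"
    and c0: "\<And>k. k \<in> K \<Longrightarrow> 0 \<le> c k"
    and le: "\<And>k. k \<in> K \<Longrightarrow> (\<integral>\<^sup>+\<omega>. ennreal (\<phi> k \<omega>) \<partial>M) \<le> (\<integral>\<^sup>+\<omega>. ennreal (\<psi> k \<omega>) \<partial>M)"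
  shows "(\<integral>\<^sup>+\<omega>. ennreal (\<Sum>k\<in>K. c k * \<phi> k \<omega>) \<partial>M) \<le> (\<integral>\<^sup>+\<omega>. ennreal (\<Sum>k\<in>K. c k * \<psi> k \<omega>) \<partial>M)"
proof -
  have eq: "(\<integral>\<^sup>+\<omega>. ennreal (\<Sum>k\<in>K. c k * g k \<omega>) \<partial>M) = (\<Sum>k\<in>K. ennreal (c k) * (\<integral>\<^sup>+\<omega>. ennreal (g k \<omega>) \<partial>M))"
    if g0: "\<And>k \<omega>. k \<in> K \<Longrightarrow> 0 \<le> g k \<omega>" and gm: "\<And>k. k \<in> K \<Longrightarrow> (\<lambda>\<omega>. g k \<omega>) \<in> borel_measurable M" for g
  proof -
    have "(\<integral>\<^sup>+\<omega>. ennreal (\<Sum>k\<in>K. c k * g k \<omega>) \<partial>M) = (\<integral>\<^sup>+\<omega>. (\<Sum>k\<in>K. ennreal (c k) * ennreal (g k \<omega>)) \<partial>M)"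
    proof (intro nn_integral_cong)
      fix \<omega>
      have "ennreal (\<Sum>k\<in>K. c k * g k \<omega>) = (\<Sum>k\<in>K. ennreal (c k * g k \<omega>))"
        using g0 c0 by (subst sum_ennreal) auto
      also have "\<dots> = (\<Sum>k\<in>K. ennreal (c k) * ennreal (g k \<omega>))"
        using g0 c0 by (intro sum.cong refl) (simp add: ennreal_mult)
      finally show "ennreal (\<Sum>k\<in>K. c k * g k \<omega>) = (\<Sum>k\<in>K. ennreal (c k) * ennreal (g k \<omega>))" .
    qed
    also have "\<dots> = (\<Sum>k\<in>K. (\<integral>\<^sup>+\<omega>. ennreal (c k) * ennreal (g k \<omega>) \<partial>M))"
      using gm by (intro nn_integral_sum) auto
    also have "\<dots> = (\<Sum>k\<in>K. ennreal (c k) * (\<integral>\<^sup>+\<omega>. ennreal (g k \<omega>) \<partial>M))"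
      using gm by (intro sum.cong refl nn_integral_cmult) auto
    finally show ?thesis .
  qed
  have e1: "(\<integral>\<^sup>+\<omega>. ennreal (\<Sum>k\<in>K. c k * \<phi> k \<omega>) \<partial>M) = (\<Sum>k\<in>K. ennreal (c k) * (\<integral>\<^sup>+\<omega>. ennreal (\<phi> k \<omega>) \<partial>M))"
    by (rule eq) (use \<phi>0 \<phi>m in auto)
  have e2: "(\<integral>\<^sup>+\<omega>. ennreal (\<Sum>k\<in>K. c k * \<psi> k \<omega>) \<partial>M) = (\<Sum>k\<in>K. ennreal (c k) * (\<integral>\<^sup>+\<omega>. ennreal (\<psi> k \<omega>) \<partial>M))"
    by (rule eq) (use \<psi>0 \<psi>m in auto)
  show ?thesis
    unfolding e1 e2 by (intro sum_mono mult_left_mono le) auto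
qed

theorem lemma5:
  fixes W :: "real^'n^'n"
    and D :: "'n \<Rightarrow> 'z measure"
    and F :: "real^'d \<Rightarrow> 'z \<Rightarrow> real"
    and J :: "'z \<Rightarrow> real^'d \<Rightarrow> real"
    and Q :: "'z set"
    and \<gamma> \<alpha> L \<sigma> \<zeta> \<rho> :: real
    and x0 :: "real^'d"
    and t :: nat
  defines "f \<equiv> (\<lambda>i x. \<integral>\<xi>. F x \<xi> \<partial>D i)"
  defines "FF \<equiv> (\<lambda>x. (1 / real CARD('n)) * (\<Sum>i\<in>UNIV. f i x))"
  defines "P \<equiv> sample_space D"
  defines "xs \<equiv> (\<lambda>\<omega> s. fst (ross_state W F J Q \<gamma> \<alpha> x0 (\<lambda>r i. \<omega> (r, i)) s))"
  assumes W: "doubly_stochastic_sym W"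
    and D: "\<And>i. prob_space (D i)"
    and Fdiff: "\<And>x \<xi>. (\<lambda>y. F y \<xi>) differentiable (at x)"
    and Q: "finite Q"
    and \<gamma>: "\<gamma> > 0"
    and A1: "\<And>i. L_smooth (f i) L"
    and \<sigma>: "\<sigma> > 0" and \<zeta>: "\<zeta> > 0"
    and A2_var: "\<And>i x. (\<integral>\<^sup>+\<xi>. ennreal ((norm (sgrad F x \<xi> - grad (f i) x))\<^sup>2) \<partial>D i) \<le> ennreal (\<sigma>\<^sup>2)"
    and A2_het: "\<And>i x. (norm (grad (f i) x - grad FF x))\<^sup>2 \<le> \<zeta>\<^sup>2"
    and A3: "\<rho> < 1" "spectral_gap W \<rho>"
    and meas_grad: "\<And>i. (\<lambda>p. sgrad F (fst p) (snd p)) \<in> borel_measurable (borel \<Otimes>\<^sub>M D i)"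
    and meas_J: "\<And>\<xi>. \<xi> \<in> Q \<Longrightarrow> J \<xi> \<in> borel_measurable borel"
    and t: "t \<ge> 1"
  shows "(\<integral>\<^sup>+\<omega>. ennreal ((frob_norm
            (cols_mat (\<lambda>i. ross_gbar W F J Q \<gamma> (xs \<omega> (t - 1)) (\<lambda>i. \<omega> (t, i)) i)
             - cols_mat (\<lambda>i. ross_g F (xs \<omega> (t - 1)) (\<lambda>i. \<omega> (t, i)) i i)))\<^sup>2) \<partial>P)
    \<le> ennreal (2 * CARD('n) * \<sigma>\<^sup>2 / omega_min W ^ 4 + 2 * CARD('n) * \<sigma>\<^sup>2
              + 8 * CARD('n) * \<zeta>\<^sup>2 / omega_min W ^ 4 + 8 * CARD('n) * \<zeta>\<^sup>2)
      + ennreal (16 * L\<^sup>2 / omega_min W ^ 4 + 16 * L\<^sup>2) *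
          (\<Sum>i\<in>UNIV. \<integral>\<^sup>+\<omega>. ennreal ((norm (xs \<omega> (t - 1) i
              - (1 / real CARD('n)) *\<^sub>R (\<Sum>k\<in>UNIV. xs \<omega> (t - 1) k)))\<^sup>2) \<partial>P)
      + ennreal (8 * CARD('n) / omega_min W ^ 4 + 8 * CARD('n)) *
          (\<integral>\<^sup>+\<omega>. ennreal ((norm ((1 / real CARD('n)) *\<^sub>R
              (\<Sum>i\<in>UNIV. grad (f i) (xs \<omega> (t - 1) i))))\<^sup>2) \<partial>P)"
proof -
  let ?N = "real CARD('n)"
  let ?Mp = "\<lambda>p::nat \<times> 'n. D (snd p)"
  define om where "om = omega_min W"
  note omp = omega_min_props[OF W]
  have om0: "0 < om" "om \<le> 1" using omp by (auto simp: om_def)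
  have Peq: "P = PiM UNIV ?Mp" by (simp add: P_def sample_space_def)
  interpret PP: prob_space P unfolding Peq by (intro prob_space_PiM D)
  have fd: "\<And>i y. f i differentiable (at y)"
    and lipf: "\<And>i y z. norm (grad (f i) y - grad (f i) z) \<le> L * norm (y - z)"
    using A1 by (auto simp: L_smooth_def)
  have GFdef: "\<And>y. grad FF y = (1 / ?N) *\<^sub>R (\<Sum>j\<in>UNIV. grad (f j) y)"
    unfolding FF_def by (rule grad_avg) (rule fd)
  have gm: "grad (f j) \<in> borel_measurable borel" for j using lip_meas lipf by blast
  have xm: "(\<lambda>\<omega>. xs \<omega> s i) \<in> borel_measurable P" for s i
    unfolding Peq xs_def using state_meas[where I=UNIV and s=s and i=i and W=W and \<gamma>=\<gamma> and \<alpha>=\<alpha> and ?x0.0=x0 and F=F and J=J and D=D and Q=Q, OF meas_grad meas_J Q]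
    by auto
  have xm': "(\<lambda>\<omega>. xs \<omega> (t - 1) i) \<in> borel_measurable (PiM (UNIV - {(t, j)}) ?Mp)" for i j
  proof -
    have "\<And>r i'. 1 \<le> r \<Longrightarrow> r \<le> t - 1 \<Longrightarrow> (r, i') \<in> UNIV - {(t, j)}" using t by auto
    then show ?thesis unfolding xs_def
      using state_meas[where I="UNIV - {(t, j)}" and s="t - 1" and i=i and W=W and \<gamma>=\<gamma> and \<alpha>=\<alpha> and ?x0.0=x0 and F=F and J=J and D=D and Q=Q, OF meas_grad meas_J Q]
      by blast
  qed
  have xloc: "xs (fun_upd \<omega> (t, j) y) (t - 1) = xs \<omega> (t - 1)" for \<omega> j y
    unfolding xs_def by (rule arg_cong[where f=fst], rule ross_state_local) (use t in auto)
  have xloci: "\<And>\<omega> y. xs (fun_upd \<omega> (t, j) y) (t - 1) i = xs \<omega> (t - 1) i" for j i using xloc by simp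
  define a where "a j i \<omega> = sgrad F (xs \<omega> (t - 1) i) (\<omega> (t, j))" for j i \<omega>
  have aeq: "ross_g F (xs \<omega> (t - 1)) (\<lambda>i. \<omega> (t, i)) j i = a j i \<omega>" for \<omega> j i
    by (simp add: ross_g_def a_def)
  have comp: "(\<lambda>\<omega>. \<omega> (t, j)) \<in> measurable P (D j)" for j
    unfolding Peq using measurable_component_singleton[of "(t, j)" UNIV ?Mp] by simp
  have am: "(\<lambda>\<omega>. (norm (a j i \<omega>))\<^sup>2) \<in> borel_measurable P" for j i
  proof -
    have "(\<lambda>\<omega>. (xs \<omega> (t - 1) i, \<omega> (t, j))) \<in> measurable P (borel \<Otimes>\<^sub>M D j)"
      using xm comp by (intro measurable_Pair) auto
    from measurable_compose[OF this meas_grad[of j]]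
    have "(\<lambda>\<omega>. a j i \<omega>) \<in> borel_measurable P" by (simp add: a_def)
    then show ?thesis by measurable
  qed
  have gxm: "(\<lambda>\<omega>. grad (f j) (xs \<omega> (t - 1) i)) \<in> borel_measurable P" for j i
    using measurable_compose[OF xm gm] by simp
  have aE: "(\<integral>\<^sup>+\<omega>. ennreal ((norm (a j i \<omega>))\<^sup>2) \<partial>P)
      \<le> (\<integral>\<^sup>+\<omega>. ennreal (\<sigma>\<^sup>2 + (norm (grad (f j) (xs \<omega> (t - 1) i)))\<^sup>2) \<partial>P)" for j i
  proof -
    have hm: "(\<lambda>(y, \<xi>). ennreal ((norm (sgrad F y \<xi>))\<^sup>2)) \<in> borel_measurable (borel \<Otimes>\<^sub>M D (snd (t, j)))"
    proof -
      have "(\<lambda>p. ennreal ((norm (sgrad F (fst p) (snd p)))\<^sup>2)) \<in> borel_measurable (borel \<Otimes>\<^sub>M D j)"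
        using meas_grad[of j] by measurable
      then show ?thesis by (simp add: case_prod_beta')
    qed
    have ir: "(\<integral>\<^sup>+\<omega>. (\<lambda>y \<xi>. ennreal ((norm (sgrad F y \<xi>))\<^sup>2)) (xs \<omega> (t - 1) i) (\<omega> (t, j)) \<partial>PiM UNIV ?Mp)
       = (\<integral>\<^sup>+\<omega>. (\<integral>\<^sup>+\<xi>. (\<lambda>y \<xi>. ennreal ((norm (sgrad F y \<xi>))\<^sup>2)) (xs \<omega> (t - 1) i) \<xi> \<partial>D (snd (t, j))) \<partial>PiM UNIV ?Mp)"
      by (rule indep_round[where X="\<lambda>\<omega>. xs \<omega> (t - 1) i", OF D xm'[of i j] xm[of "t - 1" i, unfolded Peq] xloci hm])
    have "(\<integral>\<^sup>+\<omega>. ennreal ((norm (a j i \<omega>))\<^sup>2) \<partial>P)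
        = (\<integral>\<^sup>+\<omega>. (\<integral>\<^sup>+\<xi>. ennreal ((norm (sgrad F (xs \<omega> (t - 1) i) \<xi>))\<^sup>2) \<partial>D j) \<partial>P)"
      using ir unfolding Peq a_def by simp
    also have "\<dots> \<le> (\<integral>\<^sup>+\<omega>. ennreal (\<sigma>\<^sup>2 + (norm (grad (f j) (xs \<omega> (t - 1) i)))\<^sup>2) \<partial>P)"
    proof (intro nn_integral_mono)
      fix \<omega>
      show "(\<integral>\<^sup>+\<xi>. ennreal ((norm (sgrad F (xs \<omega> (t - 1) i) \<xi>))\<^sup>2) \<partial>D j) \<le> ennreal (\<sigma>\<^sup>2 + (norm (grad (f j) (xs \<omega> (t - 1) i)))\<^sup>2)"
        by (rule unbiased[OF D Fdiff meas_grad[of j] _ A1[of j] A2_var[of j]]) (simp add: f_def)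
    qed
    finally show ?thesis .
  qed
  define P0 where "P0 i = {j. 0 < W$i$j}" for i
  define c3 where "c3 = 2 * (1 / om) ^ 3"
  have c30: "0 \<le> c3" using om0 by (simp add: c3_def)
  define \<kappa> where "\<kappa> p = (if snd p \<in> P0 (fst p) then c3 else 0) + (if snd p = fst p then 2 else 0)" for p :: "'n \<times> 'n"
  have \<kappa>0: "0 \<le> \<kappa> p" for p using c30 by (simp add: \<kappa>_def)
  have sum_pairs: "(\<Sum>p\<in>UNIV. \<kappa> p * v (fst p) (snd p)) = (\<Sum>i\<in>UNIV. c3 * (\<Sum>j\<in>P0 i. v i j) + 2 * v i i)" for v :: "'n \<Rightarrow> 'n \<Rightarrow> real"
  proof -
    have "(\<Sum>p\<in>UNIV. \<kappa> p * v (fst p) (snd p)) = (\<Sum>p\<in>UNIV \<times> UNIV. \<kappa> p * v (fst p) (snd p))" by simp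
    also have "\<dots> = (\<Sum>(i, j)\<in>UNIV \<times> UNIV. \<kappa> (i, j) * v i j)" by (rule sum.cong) auto
    also have "\<dots> = (\<Sum>i\<in>UNIV. \<Sum>j\<in>UNIV. \<kappa> (i, j) * v i j)" by (rule sum.cartesian_product[symmetric])
    also have "\<dots> = (\<Sum>i\<in>UNIV. c3 * (\<Sum>j\<in>P0 i. v i j) + 2 * v i i)"
    proof (intro sum.cong refl)
      fix i
      have "(\<Sum>j\<in>UNIV. \<kappa> (i, j) * v i j) = (\<Sum>j\<in>UNIV. (if j \<in> P0 i then c3 * v i j else 0)) + (\<Sum>j\<in>UNIV. (if j = i then 2 * v i j else 0))"
      proof -
        have pt: "\<kappa> (i, j) * v i j = (if j \<in> P0 i then c3 * v i j else 0) + (if j = i then 2 * v i j else 0)" for j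
          by (simp add: \<kappa>_def distrib_right)
        show ?thesis by (simp only: pt sum.distrib)
      qed
      also have "(\<Sum>j\<in>UNIV. (if j \<in> P0 i then c3 * v i j else 0)) = (\<Sum>j\<in>UNIV \<inter> P0 i. c3 * v i j)"
        by (rule sum.inter_restrict[symmetric]) simp
      also have "\<dots> = c3 * (\<Sum>j\<in>P0 i. v i j)" by (simp add: sum_distrib_left)
      also have "(\<Sum>j\<in>UNIV. (if j = i then 2 * v i j else 0)) = 2 * v i i" by simp
      finally show "(\<Sum>j\<in>UNIV. \<kappa> (i, j) * v i j) = c3 * (\<Sum>j\<in>P0 i. v i j) + 2 * v i i" .
    qed
    finally show ?thesis .
  qed
  define S where "S i \<omega> = (norm (xs \<omega> (t - 1) i - (1 / real CARD('n)) *\<^sub>R (\<Sum>k\<in>UNIV. xs \<omega> (t - 1) k)))\<^sup>2" for i \<omega>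
  define A where "A \<omega> = (norm ((1 / real CARD('n)) *\<^sub>R (\<Sum>i\<in>UNIV. grad (f i) (xs \<omega> (t - 1) i))))\<^sup>2" for \<omega>
  define R0 where "R0 = 2 * CARD('n) * \<sigma>\<^sup>2 / omega_min W ^ 4 + 2 * CARD('n) * \<sigma>\<^sup>2 + 8 * CARD('n) * \<zeta>\<^sup>2 / omega_min W ^ 4 + 8 * CARD('n) * \<zeta>\<^sup>2"
  define cL where "cL = 16 * L\<^sup>2 / omega_min W ^ 4 + 16 * L\<^sup>2"
  define cA where "cA = 8 * CARD('n) / omega_min W ^ 4 + 8 * CARD('n)"
  have R00: "0 \<le> R0" and cL0: "0 \<le> cL" and cA0: "0 \<le> cA" using om0 by (auto simp: R0_def cL_def cA_def om_def)
  have Sm: "S i \<in> borel_measurable P" for i unfolding S_def using xm by measurable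
  have Am: "A \<in> borel_measurable P" unfolding A_def using gxm by measurable
  have step1: "(frob_norm (cols_mat (\<lambda>i. ross_gbar W F J Q \<gamma> (xs \<omega> (t - 1)) (\<lambda>i. \<omega> (t, i)) i)
             - cols_mat (\<lambda>i. ross_g F (xs \<omega> (t - 1)) (\<lambda>i. \<omega> (t, i)) i i)))\<^sup>2
      \<le> (\<Sum>p\<in>UNIV. \<kappa> p * (norm (a (snd p) (fst p) \<omega>))\<^sup>2)" for \<omega>
  proof -
    have "(frob_norm (cols_mat (\<lambda>i. ross_gbar W F J Q \<gamma> (xs \<omega> (t - 1)) (\<lambda>i. \<omega> (t, i)) i)
             - cols_mat (\<lambda>i. ross_g F (xs \<omega> (t - 1)) (\<lambda>i. \<omega> (t, i)) i i)))\<^sup>2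
        = (\<Sum>i\<in>UNIV. (norm (ross_gbar W F J Q \<gamma> (xs \<omega> (t - 1)) (\<lambda>i. \<omega> (t, i)) i - ross_g F (xs \<omega> (t - 1)) (\<lambda>i. \<omega> (t, i)) i i))\<^sup>2)"
      by (rule frob_cols_sq)
    also have "\<dots> \<le> (\<Sum>i\<in>UNIV. c3 * (\<Sum>j\<in>P0 i. (norm (a j i \<omega>))\<^sup>2) + 2 * (norm (a i i \<omega>))\<^sup>2)"
      unfolding c3_def P0_def om_def aeq[symmetric] by (intro sum_mono gbar_bound[OF W])
    also have "\<dots> = (\<Sum>p\<in>UNIV. \<kappa> p * (norm (a (snd p) (fst p) \<omega>))\<^sup>2)"
      using sum_pairs[of "\<lambda>i j. (norm (a j i \<omega>))\<^sup>2"] by simp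
    finally show ?thesis .
  qed
  have step3: "(\<Sum>p\<in>UNIV. \<kappa> p * (\<sigma>\<^sup>2 + (norm (grad (f (snd p)) (xs \<omega> (t - 1) (fst p))))\<^sup>2))
      \<le> R0 + cL * (\<Sum>i\<in>UNIV. S i \<omega>) + cA * A \<omega>" for \<omega>
  proof -
    have "(\<Sum>p\<in>UNIV. \<kappa> p * (\<sigma>\<^sup>2 + (norm (grad (f (snd p)) (xs \<omega> (t - 1) (fst p))))\<^sup>2))
        = (\<Sum>i\<in>UNIV. c3 * (\<Sum>j\<in>P0 i. \<sigma>\<^sup>2 + (norm (grad (f j) (xs \<omega> (t - 1) i)))\<^sup>2) + 2 * (\<sigma>\<^sup>2 + (norm (grad (f i) (xs \<omega> (t - 1) i)))\<^sup>2))"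
      using sum_pairs[of "\<lambda>i j. \<sigma>\<^sup>2 + (norm (grad (f j) (xs \<omega> (t - 1) i)))\<^sup>2"] by simp
    also have "\<dots> \<le> R0 + cL * (\<Sum>i\<in>UNIV. S i \<omega>) + cA * A \<omega>"
      unfolding c3_def P0_def R0_def cL_def cA_def S_def A_def
      using det_bound[where x="xs \<omega> (t - 1)" and gf="\<lambda>j. grad (f j)" and GF="grad FF" and P="\<lambda>i. {j. 0 < W$i$j}" and \<omega>=om
          and \<sigma>=\<sigma> and \<zeta>=\<zeta> and L=L, OF GFdef A2_het lipf] omp(4) om0
      by (simp add: om_def)
    finally show ?thesis .
  qed
  have "(\<integral>\<^sup>+\<omega>. ennreal ((frob_norm
            (cols_mat (\<lambda>i. ross_gbar W F J Q \<gamma> (xs \<omega> (t - 1)) (\<lambda>i. \<omega> (t, i)) i)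
             - cols_mat (\<lambda>i. ross_g F (xs \<omega> (t - 1)) (\<lambda>i. \<omega> (t, i)) i i)))\<^sup>2) \<partial>P)
      \<le> (\<integral>\<^sup>+\<omega>. ennreal (\<Sum>p\<in>UNIV. \<kappa> p * (norm (a (snd p) (fst p) \<omega>))\<^sup>2) \<partial>P)"
    using step1 by (intro nn_integral_mono ennreal_leI) auto
  also have "\<dots> \<le> (\<integral>\<^sup>+\<omega>. ennreal (\<Sum>p\<in>UNIV. \<kappa> p * (\<sigma>\<^sup>2 + (norm (grad (f (snd p)) (xs \<omega> (t - 1) (fst p))))\<^sup>2)) \<partial>P)"
  proof (rule nn_sum_mono)
    show "(\<lambda>\<omega>. (norm (a (snd p) (fst p) \<omega>))\<^sup>2) \<in> borel_measurable P" for p using am by simp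
    show "(\<lambda>\<omega>. \<sigma>\<^sup>2 + (norm (grad (f (snd p)) (xs \<omega> (t - 1) (fst p))))\<^sup>2) \<in> borel_measurable P" for p
      using gxm[of "snd p" "fst p"] by measurable
    show "(\<integral>\<^sup>+\<omega>. ennreal ((norm (a (snd p) (fst p) \<omega>))\<^sup>2) \<partial>P)
        \<le> (\<integral>\<^sup>+\<omega>. ennreal (\<sigma>\<^sup>2 + (norm (grad (f (snd p)) (xs \<omega> (t - 1) (fst p))))\<^sup>2) \<partial>P)" for p
      by (rule aE)
  qed (auto simp: \<kappa>0)
  also have "\<dots> \<le> (\<integral>\<^sup>+\<omega>. ennreal (R0 + cL * (\<Sum>i\<in>UNIV. S i \<omega>) + cA * A \<omega>) \<partial>P)"
    using step3 by (intro nn_integral_mono ennreal_leI) auto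
  also have "\<dots> = (\<integral>\<^sup>+\<omega>. ennreal R0 + ennreal cL * (\<Sum>i\<in>UNIV. ennreal (S i \<omega>)) + ennreal cA * ennreal (A \<omega>) \<partial>P)"
  proof (intro nn_integral_cong)
    fix \<omega>
    have S0: "0 \<le> S i \<omega>" for i by (simp add: S_def)
    have A0: "0 \<le> A \<omega>" by (simp add: A_def)
    have "(\<Sum>i\<in>UNIV. ennreal (S i \<omega>)) = ennreal (\<Sum>i\<in>UNIV. S i \<omega>)" using S0 by (simp add: sum_ennreal)
    moreover have "0 \<le> (\<Sum>i\<in>UNIV. S i \<omega>)" using S0 by (simp add: sum_nonneg)
    ultimately show "ennreal (R0 + cL * (\<Sum>i\<in>UNIV. S i \<omega>) + cA * A \<omega>) = ennreal R0 + ennreal cL * (\<Sum>i\<in>UNIV. ennreal (S i \<omega>)) + ennreal cA * ennreal (A \<omega>)"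
      using R00 cL0 cA0 A0 by (simp add: ennreal_plus[symmetric] ennreal_mult[symmetric] del: ennreal_plus)
  qed
  also have "\<dots> = ennreal R0 + ennreal cL * (\<Sum>i\<in>UNIV. \<integral>\<^sup>+\<omega>. ennreal (S i \<omega>) \<partial>P) + ennreal cA * (\<integral>\<^sup>+\<omega>. ennreal (A \<omega>) \<partial>P)"
  proof -
    have m1: "(\<lambda>\<omega>. ennreal cL * (\<Sum>i\<in>UNIV. ennreal (S i \<omega>))) \<in> borel_measurable P" using Sm by measurable
    have m2: "(\<lambda>\<omega>. ennreal cA * ennreal (A \<omega>)) \<in> borel_measurable P" using Am by measurable
    have "(\<integral>\<^sup>+\<omega>. ennreal R0 + ennreal cL * (\<Sum>i\<in>UNIV. ennreal (S i \<omega>)) + ennreal cA * ennreal (A \<omega>) \<partial>P)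
        = (\<integral>\<^sup>+\<omega>. ennreal R0 + ennreal cL * (\<Sum>i\<in>UNIV. ennreal (S i \<omega>)) \<partial>P) + (\<integral>\<^sup>+\<omega>. ennreal cA * ennreal (A \<omega>) \<partial>P)"
      using m1 m2 by (intro nn_integral_add) auto
    also have "(\<integral>\<^sup>+\<omega>. ennreal R0 + ennreal cL * (\<Sum>i\<in>UNIV. ennreal (S i \<omega>)) \<partial>P)
        = (\<integral>\<^sup>+\<omega>. ennreal R0 \<partial>P) + (\<integral>\<^sup>+\<omega>. ennreal cL * (\<Sum>i\<in>UNIV. ennreal (S i \<omega>)) \<partial>P)"
      using m1 by (intro nn_integral_add) auto
    also have "(\<integral>\<^sup>+\<omega>. ennreal R0 \<partial>P) = ennreal R0" by (simp add: PP.emeasure_space_1)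
    also have "(\<integral>\<^sup>+\<omega>. ennreal cL * (\<Sum>i\<in>UNIV. ennreal (S i \<omega>)) \<partial>P) = ennreal cL * (\<Sum>i\<in>UNIV. \<integral>\<^sup>+\<omega>. ennreal (S i \<omega>) \<partial>P)"
    proof -
      have ns: "(\<integral>\<^sup>+\<omega>. (\<Sum>i\<in>UNIV. ennreal (S i \<omega>)) \<partial>P) = (\<Sum>i\<in>UNIV. \<integral>\<^sup>+\<omega>. ennreal (S i \<omega>) \<partial>P)"
        using Sm by (intro nn_integral_sum) auto
      show ?thesis using Sm ns by (subst nn_integral_cmult) auto
    qed
    also have "(\<integral>\<^sup>+\<omega>. ennreal cA * ennreal (A \<omega>) \<partial>P) = ennreal cA * (\<integral>\<^sup>+\<omega>. ennreal (A \<omega>) \<partial>P)"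
      using Am by (subst nn_integral_cmult) auto
    finally show ?thesis .
  qed
  finally show ?thesis unfolding R0_def cL_def cA_def S_def A_def .
qed

end
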